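(* Assume Setup (S) and the completion data (C), and suppose the integer columns $c_n$ can be (and are) chosen so that $\det A_{n,n+1}=1$ for all $n\ge 0$. Then $G=\mathbb{Z}$ and the homomorphism $\Psi:K_0(\mathfrak{A})\to C(X_{min},\mathbb{Z})$ determined by $\Psi\circ\iota_n=\Phi_n$ is a group isomorphism onto $C(X_{min},\mathbb{Z})$ sending the order unit $[1_{\mathfrak{A}}]$ to $\chi_{X_{min}}$.
   Context: Setup (S): Let $\mathfrak{A}=\varinjlim(\mathfrak{A}_n,\phi_n)$ be an AF C$^*$-algebra with $\mathfrak{A}_0=\mathbb{C}$, $\mathfrak{A}_n$ having exactly $n+1$ summands, $\phi_n$ unital injective $*$-homomorphisms with multiplicity matrices $\overline{A}_{n,n+1}\in M_{n+2,n+1}(\mathbb{N})$ ($(i,j)$ entry = multiplicity of summand $j$ of $\mathfrak{A}_n$ in summand $i$ of $\mathfrak{A}_{n+1}$), each of rank $n+1$. The Bratteli diagram has vertices $v(i,n)$, $1\le i\le n+1$, and $(\overline{A}_{n,n+1})_{ij}$ edges from $v(j,n)$ to $v(i,n+1)$. A minimal reduction is a subgraph with the same vertices, obtained by deleting edges only, in which for all $n\ge 0$ each vertex at level $n+1$ receives exactly one edge from level $n$ and each vertex at level $n$ emits at least one edge to level $n+1$. Fix a minimal reduction. Then for each $n\ge 1$ there are unique $1\le r'_n<r_n\le n+1$ and $1\le a_n\le n$ such that $v(r'_n,n)$ and $v(r_n,n)$ are the two vertices joined to $v(a_n,n-1)$, every other vertex of level $n-1$ being joined to exactly one vertex of level $n$;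 set $r_0=1$. $X_{min}$ is the set of infinite paths $(v(i_n,n))_{n\ge0}$, $i_0=1$, in the minimal reduction, with the topology having as clopen basis the nonempty sets $B(i,n)=\{\text{paths with }i_n=i\}$; it is a compact metrizable totally disconnected space. Define the linear map $R_n:\mathbb{C}^{n+1}\to C(X_{min},\mathbb{C})$ by $R_n(\alpha_1,\dots,\alpha_{n+1})=\sum_{l=0}^n\alpha_{l+1}\chi_{B(r_l,l)}$. Completion data (C): $K_0(\mathfrak{A}_n)$ is identified with $\mathbb{Z}^{n+1}$ (column vectors, positive cone $\mathbb{Z}_+^{n+1}$), $K_0(\phi_n)=\phi_{n*}$ is multiplication by $\overline{A}_{n,n+1}$, and $K_0(\mathfrak{A})=\varinjlim(\mathbb{Z}^{n+1},\phi_{n*})$ with canonical maps $\iota_n$ and order unit the image of $1\in\mathbb{Z}=K_0(\mathfrak{A}_0)$. For each $n\ge 0$ choose a column $c_n\in\mathbb{Z}^{n+2}$ such that $A_{n,n+1}=[\,\overline{A}_{n,n+1}\mid c_n\,]\in M_{n+2}(\mathbb{Z})$ is invertible. Put $A_n=(A_{0,1}^{-1}\oplus I_{n-1})(A_{1,2}^{-1}\oplus I_{n-2})\cdots(A_{n-2,n-1}^{-1}\oplus I_1)A_{n-1,n}^{-1}$ for $n\ge1$, let $G=\bigcup_{n\ge1}\{a/\det(A_n^{-1}):a\in\mathbb{Z}\}\subseteq\mathbb{Q}$ with the discrete topology, and $\Phi_n=R_n\circ A_n$ restricted to $\mathbb{Z}^{n+1}$; one has $\Phi_{n+1}\circ\phi_{n*}=\Phi_n$,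 so $\Psi$ is well defined. *)

theory Defs
  imports "HOL-Analysis.Function_Topology"
    "Jordan_Normal_Form.Determinant"
    "Jordan_Normal_Form.Gauss_Jordan_Elimination"
    "Jordan_Normal_Form.DL_Rank"
begin

(* Conventions: all indices are 0-based.  Vertex v(i,n) of the paper (1 <= i <= n+1)
   is vertex i-1 here (0 <= i <= n).  Abar n is the (n+2) x (n+1) multiplicity matrix
   \<open>overline A_{n,n+1}\<close>; entry (i,j) = multiplicity of summand j of A_n in summand i of A_{n+1}.
   E n i j is the number of edges of the fixed minimal reduction from v(j,n) to v(i,n+1). *)

definition minimal_reduction :: "(nat \<Rightarrow> int mat) \<Rightarrow> (nat \<Rightarrow> nat \<Rightarrow> nat \<Rightarrow> nat) \<Rightarrow> bool" where
  "minimal_reduction Abar E \<longleftrightarrow>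
     (\<forall>n. (\<forall>i\<le>n+1. \<forall>j\<le>n. int (E n i j) \<le> Abar n $$ (i,j))
        \<and> (\<forall>i\<le>n+1. (\<Sum>j\<le>n. E n i j) = 1)
        \<and> (\<forall>j\<le>n. \<exists>i\<le>n+1. 0 < E n i j))"

definition a_seq :: "(nat \<Rightarrow> nat \<Rightarrow> nat \<Rightarrow> nat) \<Rightarrow> nat \<Rightarrow> nat" where
  "a_seq E n = (THE a. a \<le> n - 1 \<and> 2 \<le> (\<Sum>i\<le>n. E (n-1) i a))"

definition r_seq :: "(nat \<Rightarrow> nat \<Rightarrow> nat \<Rightarrow> nat) \<Rightarrow> nat \<Rightarrow> nat" where
  "r_seq E n = (if n = 0 then 0 else (GREATEST i. i \<le> n \<and> 0 < E (n-1) i (a_seq E n)))"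

definition Xmin :: "(nat \<Rightarrow> nat \<Rightarrow> nat \<Rightarrow> nat) \<Rightarrow> (nat \<Rightarrow> nat) set" where
  "Xmin E = {x. x 0 = 0 \<and> (\<forall>n. x n \<le> n \<and> 0 < E n (x (Suc n)) (x n))}"

definition chiB :: "nat \<Rightarrow> nat \<Rightarrow> (nat \<Rightarrow> nat) \<Rightarrow> 'a::zero_neq_one" where
  "chiB i n x = (if x n = i then 1 else 0)"

definition Rmap :: "(nat \<Rightarrow> nat \<Rightarrow> nat \<Rightarrow> nat) \<Rightarrow> nat \<Rightarrow> rat vec \<Rightarrow> (nat \<Rightarrow> nat) \<Rightarrow> rat" where
  "Rmap E n \<alpha> x = (\<Sum>l\<le>n. \<alpha> $ l * chiB (r_seq E l) l x)"

definition Acomp :: "(nat \<Rightarrow> int mat) \<Rightarrow> (nat \<Rightarrow> int vec) \<Rightarrow> nat \<Rightarrow> rat mat" where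
  "Acomp Abar c n = mat (n+2) (n+2)
     (\<lambda>(i,j). if j < n+1 then rat_of_int (Abar n $$ (i,j)) else rat_of_int (c n $ i))"

definition minv :: "rat mat \<Rightarrow> rat mat" where
  "minv M = the (mat_inverse M)"

definition Ablk :: "(nat \<Rightarrow> int mat) \<Rightarrow> (nat \<Rightarrow> int vec) \<Rightarrow> nat \<Rightarrow> nat \<Rightarrow> rat mat" where
  "Ablk Abar c n k = four_block_mat (minv (Acomp Abar c k))
      (0\<^sub>m (k+2) (n-1-k)) (0\<^sub>m (n-1-k) (k+2)) (1\<^sub>m (n-1-k))"

definition Amat :: "(nat \<Rightarrow> int mat) \<Rightarrow> (nat \<Rightarrow> int vec) \<Rightarrow> nat \<Rightarrow> rat mat" where
  "Amat Abar c n = foldr (\<lambda>k M. Ablk Abar c n k * M) [0..<n] (1\<^sub>m (n+1))"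

definition Gset :: "(nat \<Rightarrow> int mat) \<Rightarrow> (nat \<Rightarrow> int vec) \<Rightarrow> rat set" where
  "Gset Abar c = (\<Union>n\<in>{1..}. {rat_of_int a / det (minv (Amat Abar c n)) | a. True})"

definition Phi :: "(nat \<Rightarrow> int mat) \<Rightarrow> (nat \<Rightarrow> int vec) \<Rightarrow> (nat \<Rightarrow> nat \<Rightarrow> nat \<Rightarrow> nat)
    \<Rightarrow> nat \<Rightarrow> int vec \<Rightarrow> (nat \<Rightarrow> nat) \<Rightarrow> rat" where
  "Phi Abar c E n v x = (if x \<in> Xmin E
      then Rmap E n (Amat Abar c n *\<^sub>v map_vec rat_of_int v) x else 0)"

fun phi_iter :: "(nat \<Rightarrow> int mat) \<Rightarrow> nat \<Rightarrow> nat \<Rightarrow> int vec \<Rightarrow> int vec" where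
  "phi_iter Abar n 0 v = v"
| "phi_iter Abar n (Suc k) v = Abar (n+k) *\<^sub>v phi_iter Abar n k v"

definition K0rel :: "(nat \<Rightarrow> int mat) \<Rightarrow> ((nat \<times> int vec) \<times> (nat \<times> int vec)) set" where
  "K0rel Abar = {((n,v),(m,w)). v \<in> carrier_vec (n+1) \<and> w \<in> carrier_vec (m+1) \<and>
      (\<exists>k. n \<le> k \<and> m \<le> k \<and> phi_iter Abar n (k-n) v = phi_iter Abar m (k-m) w)}"

definition K0 :: "(nat \<Rightarrow> int mat) \<Rightarrow> (nat \<times> int vec) set set" where
  "K0 Abar = (SIGMA n:UNIV. carrier_vec (n+1)) // K0rel Abar"

definition iota :: "(nat \<Rightarrow> int mat) \<Rightarrow> nat \<Rightarrow> int vec \<Rightarrow> (nat \<times> int vec) set" where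
  "iota Abar n v = K0rel Abar `` {(n,v)}"

definition K0add :: "(nat \<Rightarrow> int mat) \<Rightarrow> (nat \<times> int vec) set \<Rightarrow> (nat \<times> int vec) set \<Rightarrow> (nat \<times> int vec) set" where
  "K0add Abar X Y = (let (n,v) = (SOME p. p \<in> X); (m,w) = (SOME p. p \<in> Y); k = max n m in
      iota Abar k (phi_iter Abar n (k-n) v + phi_iter Abar m (k-m) w))"

definition K0grp :: "(nat \<Rightarrow> int mat) \<Rightarrow> (nat \<times> int vec) set monoid" where
  "K0grp Abar = \<lparr>carrier = K0 Abar, mult = K0add Abar, one = iota Abar 0 (0\<^sub>v 1)\<rparr>"

definition K0unit :: "(nat \<Rightarrow> int mat) \<Rightarrow> (nat \<times> int vec) set" where
  "K0unit Abar = iota Abar 0 (vec 1 (\<lambda>_. 1))"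

definition CXZ :: "(nat \<Rightarrow> nat \<Rightarrow> nat \<Rightarrow> nat) \<Rightarrow> ((nat \<Rightarrow> nat) \<Rightarrow> int) set" where
  "CXZ E = {f. continuous_on (Xmin E) f \<and> (\<forall>x. x \<notin> Xmin E \<longrightarrow> f x = 0)}"

definition CXZgrp :: "(nat \<Rightarrow> nat \<Rightarrow> nat \<Rightarrow> nat) \<Rightarrow> ((nat \<Rightarrow> nat) \<Rightarrow> int) monoid" where
  "CXZgrp E = \<lparr>carrier = CXZ E, mult = (\<lambda>f g x. f x + g x), one = (\<lambda>_. 0)\<rparr>"

definition chiX :: "(nat \<Rightarrow> nat \<Rightarrow> nat \<Rightarrow> nat) \<Rightarrow> (nat \<Rightarrow> nat) \<Rightarrow> int" where
  "chiX E x = (if x \<in> Xmin E then 1 else 0)"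

end

theory Submission
  imports Defs
begin

lemma minv_unique:
  fixes A B :: "rat mat"
  assumes A: "A \<in> carrier_mat n n" and B: "B \<in> carrier_mat n n"
    and AB: "A * B = 1\<^sub>m n" and BA: "B * A = 1\<^sub>m n"
  shows "minv A = B"
proof (cases "mat_inverse A")
  case None
  have "A \<in> Units (ring_mat TYPE(rat) n ())"
    unfolding Units_def using A B AB BA by (auto simp: ring_mat_simps)
  with mat_inverse(1)[OF A None, of "()"] show ?thesis by blast
next
  case (Some B')
  from mat_inverse(2)[OF A Some] have h: "A * B' = 1\<^sub>m n" "B' * A = 1\<^sub>m n" "B' \<in> carrier_mat n n" by auto
  have "B' = B' * (A * B)" using AB h(3) by simp
  also have "\<dots> = (B' * A) * B" using A B h(3) by (simp add: assoc_mult_mat)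
  also have "\<dots> = B" using h(2) B by simp
  finally show ?thesis unfolding minv_def Some by simp
qed

definition ext1 :: "nat \<Rightarrow> 'a::semiring_1 mat \<Rightarrow> 'a mat" where
  "ext1 n M = four_block_mat M (0\<^sub>m (n+1) 1) (0\<^sub>m 1 (n+1)) (1\<^sub>m 1)"

lemma ext1_carrier: "M \<in> carrier_mat (n+1) (n+1) \<Longrightarrow> ext1 n M \<in> carrier_mat (n+2) (n+2)"
  unfolding ext1_def using four_block_carrier_mat[of M "n+1" "n+1" "1\<^sub>m 1" 1 1] by simp

lemma ext1_mult: assumes "M \<in> carrier_mat (n+1) (n+1)" "N \<in> carrier_mat (n+1) (n+1)"
  shows "ext1 n M * ext1 n N = ext1 n (M * N)"
  unfolding ext1_def
  by (subst mult_four_block_mat[OF assms(1) zero_carrier_mat zero_carrier_mat one_carrier_mat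
     assms(2) zero_carrier_mat zero_carrier_mat one_carrier_mat], insert assms, auto)

lemma ext1_one: "ext1 n (1\<^sub>m (n+1)) = 1\<^sub>m (n+2)"
  unfolding ext1_def using four_block_one_mat[of "n+1" 1] by simp

lemma ext1_hom: "M \<in> carrier_mat (n+1) (n+1) \<Longrightarrow>
   map_mat rat_of_int (ext1 n M) = ext1 n (map_mat rat_of_int M)"
  unfolding ext1_def by (rule eq_matI, auto)

lemma det_ext1: "M \<in> carrier_mat (n+1) (n+1) \<Longrightarrow> det (ext1 n M) = det (M::'a::idom mat)"
  unfolding ext1_def
  by (subst det_four_block_mat_lower_left_zero[of _ "n+1" _ 1], auto)

lemma adj_hom: "map_mat rat_of_int (adj_mat A) = adj_mat (map_mat rat_of_int A)"
proof -
  have md: "mat_delete (map_mat rat_of_int A) i j = map_mat rat_of_int (mat_delete A i j)" for i j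
    unfolding mat_delete_def by (rule eq_matI, auto)
  show ?thesis unfolding adj_mat_def cofactor_def
    by (rule eq_matI, auto simp: md)
qed

lemma foldr_carrier:
  assumes "\<And>k. k \<in> set xs \<Longrightarrow> X k \<in> carrier_mat m m" "C \<in> carrier_mat m m"
  shows "foldr (\<lambda>k M. X k * M) xs C \<in> carrier_mat m m"
  using assms by (induction xs) (auto intro!: mult_carrier_mat[of _ m m])

lemma foldr_ext1:
  assumes "\<And>k. k \<in> set xs \<Longrightarrow> X k \<in> carrier_mat (n+1) (n+1)" "C \<in> carrier_mat (n+2) (n+2)"
  shows "foldr (\<lambda>k M. ext1 n (X k) * M) xs C = ext1 n (foldr (\<lambda>k M. X k * M) xs (1\<^sub>m (n+1))) * C"
  using assms
proof (induction xs)
  case Nil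
  then show ?case by (simp add: ext1_one[of n, simplified] left_mult_one_mat)
next
  case (Cons a xs)
  have F: "foldr (\<lambda>k M. X k * M) xs (1\<^sub>m (n+1)) \<in> carrier_mat (n+1) (n+1)"
    by (rule foldr_carrier, insert Cons.prems, auto)
  have Xa: "X a \<in> carrier_mat (n+1) (n+1)" using Cons.prems by auto
  have "foldr (\<lambda>k M. ext1 n (X k) * M) (a#xs) C
      = ext1 n (X a) * (ext1 n (foldr (\<lambda>k M. X k * M) xs (1\<^sub>m (n+1))) * C)"
    using Cons by simp
  also have "\<dots> = (ext1 n (X a) * ext1 n (foldr (\<lambda>k M. X k * M) xs (1\<^sub>m (n+1)))) * C"
    using ext1_carrier[OF Xa] ext1_carrier[OF F] Cons.prems(2) by (simp add: assoc_mult_mat)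
  also have "\<dots> = ext1 n (X a * foldr (\<lambda>k M. X k * M) xs (1\<^sub>m (n+1))) * C"
    using ext1_mult[OF Xa F] by simp
  finally show ?case by simp
qed

locale setupS =
  fixes Abar :: "nat \<Rightarrow> int mat" and c :: "nat \<Rightarrow> int vec"
    and E :: "nat \<Rightarrow> nat \<Rightarrow> nat \<Rightarrow> nat"
  assumes dims: "\<And>n. Abar n \<in> carrier_mat (n+2) (n+1)"
    and red: "minimal_reduction Abar E"
    and cdim: "\<And>n. c n \<in> carrier_vec (n+2)"
    and det1: "\<And>n. det (Acomp Abar c n) = 1"
begin

definition AI :: "nat \<Rightarrow> int mat" where
  "AI n = mat (n+2) (n+2) (\<lambda>(i,j). if j < n+1 then Abar n $$ (i,j) else c n $ i)"

lemma AI_carrier: "AI n \<in> carrier_mat (n+2) (n+2)" unfolding AI_def by simp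

lemma Acomp_eq: "Acomp Abar c n = map_mat rat_of_int (AI n)"
  unfolding AI_def Acomp_def by (rule eq_matI, auto)

lemma det_AI: "det (AI n) = 1"
  using det1[of n] unfolding Acomp_eq of_int_hom.hom_det by simp

lemma AI_adj: "AI n * adj_mat (AI n) = 1\<^sub>m (n+2)" "adj_mat (AI n) * AI n = 1\<^sub>m (n+2)"
  "adj_mat (AI n) \<in> carrier_mat (n+2) (n+2)"
  using adj_mat[OF AI_carrier[of n]] det_AI[of n] by auto

lemma minv_Acomp: "minv (Acomp Abar c n) = map_mat rat_of_int (adj_mat (AI n))"
proof (rule minv_unique[of _ "n+2"])
  show "Acomp Abar c n * of_int_hom.mat_hom (adj_mat (AI n)) = 1\<^sub>m (n + 2)"
    unfolding Acomp_eq
    by (subst of_int_hom.mat_hom_mult[symmetric, OF AI_carrier AI_adj(3)], simp add: AI_adj of_int_hom.mat_hom_one)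
  show "of_int_hom.mat_hom (adj_mat (AI n)) * Acomp Abar c n = 1\<^sub>m (n + 2)"
    unfolding Acomp_eq
    by (subst of_int_hom.mat_hom_mult[symmetric, OF AI_adj(3) AI_carrier], simp add: AI_adj of_int_hom.mat_hom_one)
qed (insert AI_carrier AI_adj(3), auto simp: Acomp_eq)

lemma minv_carrier: "minv (Acomp Abar c n) \<in> carrier_mat (n+2) (n+2)"
  using AI_adj(3) by (simp add: minv_Acomp)

lemma Ablk_carrier: "k < n \<Longrightarrow> Ablk Abar c n k \<in> carrier_mat (n+1) (n+1)"
  unfolding Ablk_def using four_block_carrier_mat[OF minv_carrier[of k] one_carrier_mat[of "n-1-k"]]
  by simp

lemma Ablk_last: "Ablk Abar c (Suc n) n = minv (Acomp Abar c n)"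
  unfolding Ablk_def using minv_carrier[of n] by (intro eq_matI, auto)

lemma Ablk_ext: "k < n \<Longrightarrow> Ablk Abar c (Suc n) k = ext1 n (Ablk Abar c n k)"
  unfolding Ablk_def ext1_def using minv_carrier[of k] by (intro eq_matI, auto)

lemma Amat_0: "Amat Abar c 0 = 1\<^sub>m 1" unfolding Amat_def by simp

lemma Amat_carrier: "Amat Abar c n \<in> carrier_mat (n+1) (n+1)"
  unfolding Amat_def by (rule foldr_carrier, auto intro: Ablk_carrier[simplified])

lemma Amat_Suc: "Amat Abar c (Suc n) = ext1 n (Amat Abar c n) * minv (Acomp Abar c n)"
proof -
  have "Amat Abar c (Suc n) = foldr (\<lambda>k M. Ablk Abar c (Suc n) k * M) [0..<n]
          (Ablk Abar c (Suc n) n * 1\<^sub>m (n+2))"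
    unfolding Amat_def by simp
  also have "Ablk Abar c (Suc n) n * 1\<^sub>m (n+2) = minv (Acomp Abar c n)"
    using minv_carrier[of n] by (simp add: Ablk_last)
  also have "foldr (\<lambda>k M. Ablk Abar c (Suc n) k * M) [0..<n] (minv (Acomp Abar c n))
     = foldr (\<lambda>k M. ext1 n (Ablk Abar c n k) * M) [0..<n] (minv (Acomp Abar c n))"
    by (rule foldr_cong, auto simp: Ablk_ext)
  also have "\<dots> = ext1 n (Amat Abar c n) * minv (Acomp Abar c n)"
    unfolding Amat_def
    by (rule foldr_ext1, auto intro: Ablk_carrier[simplified] minv_carrier[simplified])
  finally show ?thesis .
qed

fun AmI :: "nat \<Rightarrow> int mat" where
  "AmI 0 = 1\<^sub>m 1"
| "AmI (Suc n) = ext1 n (AmI n) * adj_mat (AI n)"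

lemma AmI_carrier: "AmI n \<in> carrier_mat (n+1) (n+1)"
proof (induction n)
  case (Suc n)
  show ?case using mult_carrier_mat[OF ext1_carrier[OF Suc] AI_adj(3)] by simp
qed simp

lemma det_AmI: "det (AmI n) = 1"
proof (induction n)
  case (Suc n)
  have "det (AmI (Suc n)) = det (ext1 n (AmI n)) * det (adj_mat (AI n))"
    by (simp, rule det_mult[OF ext1_carrier[OF AmI_carrier] AI_adj(3)])
  moreover have "det (adj_mat (AI n)) = 1"
    using det_mult[OF AI_carrier AI_adj(3), of n] det_AI[of n] AI_adj(1)[of n] by simp
  ultimately show ?case using Suc det_ext1[OF AmI_carrier] by simp
qed simp

lemma Amat_eq: "Amat Abar c n = map_mat rat_of_int (AmI n)"
proof (induction n)
  case 0 then show ?case by (simp add: Amat_0 of_int_hom.mat_hom_one)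
next
  case (Suc n)
  show ?case
    unfolding Amat_Suc Suc AmI.simps minv_Acomp
    by (subst of_int_hom.mat_hom_mult[OF ext1_carrier[OF AmI_carrier] AI_adj(3)],
        simp add: ext1_hom[OF AmI_carrier])
qed

lemma det_Amat: "det (Amat Abar c n) = 1"
  unfolding Amat_eq of_int_hom.hom_det det_AmI by simp

end


context setupS begin

definition vext :: "nat \<Rightarrow> 'a::zero vec \<Rightarrow> 'a vec" where
  "vext n w = vec (n+2) (\<lambda>i. if i < n+1 then w $ i else 0)"

lemma Acomp_vext:
  assumes v: "v \<in> carrier_vec (n+1)"
  shows "Acomp Abar c n *\<^sub>v vext n (map_vec rat_of_int v) = map_vec rat_of_int (Abar n *\<^sub>v v)"
proof (rule eq_vecI)
  show "dim_vec (Acomp Abar c n *\<^sub>v vext n (map_vec rat_of_int v)) = dim_vec (map_vec rat_of_int (Abar n *\<^sub>v v))"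
    using dims[of n] by (simp add: Acomp_def)
  fix i assume "i < dim_vec (map_vec rat_of_int (Abar n *\<^sub>v v))"
  then have i: "i < n+2" using dims[of n] by simp
  have "(Acomp Abar c n *\<^sub>v vext n (map_vec rat_of_int v)) $ i
     = (\<Sum>j\<in>{0..<n+2}. Acomp Abar c n $$ (i,j) * vext n (map_vec rat_of_int v) $ j)"
    using i by (simp add: Acomp_def vext_def scalar_prod_def)
  also have "\<dots> = (\<Sum>j\<in>{0..<n+1}. Acomp Abar c n $$ (i,j) * vext n (map_vec rat_of_int v) $ j)"
    by (simp add: vext_def)
  also have "\<dots> = (\<Sum>j\<in>{0..<n+1}. rat_of_int (Abar n $$ (i,j) * v $ j))"
    using i v by (intro sum.cong, auto simp: vext_def Acomp_def)
  also have "\<dots> = map_vec rat_of_int (Abar n *\<^sub>v v) $ i"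
    using i v dims[of n] by (simp add: scalar_prod_def)
  finally show "(Acomp Abar c n *\<^sub>v vext n (map_vec rat_of_int v)) $ i = map_vec rat_of_int (Abar n *\<^sub>v v) $ i" .
qed

lemma minv_Abar:
  assumes v: "v \<in> carrier_vec (n+1)"
  shows "minv (Acomp Abar c n) *\<^sub>v map_vec rat_of_int (Abar n *\<^sub>v v) = vext n (map_vec rat_of_int v)"
proof -
  have A: "Acomp Abar c n \<in> carrier_mat (n+2) (n+2)" by (simp add: Acomp_def)
  have inv: "minv (Acomp Abar c n) * Acomp Abar c n = 1\<^sub>m (n+2)"
    apply (subst minv_Acomp, subst Acomp_eq)
    by (subst of_int_hom.mat_hom_mult[symmetric, OF AI_adj(3) AI_carrier], simp add: AI_adj of_int_hom.mat_hom_one)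
  have ve: "vext n (map_vec rat_of_int v) \<in> carrier_vec (n+2)" by (simp add: vext_def)
  have "minv (Acomp Abar c n) *\<^sub>v map_vec rat_of_int (Abar n *\<^sub>v v)
      = minv (Acomp Abar c n) *\<^sub>v (Acomp Abar c n *\<^sub>v vext n (map_vec rat_of_int v))"
    by (simp add: Acomp_vext[OF v])
  also have "\<dots> = (minv (Acomp Abar c n) * Acomp Abar c n) *\<^sub>v vext n (map_vec rat_of_int v)"
    using minv_carrier[of n] A ve by simp
  also have "\<dots> = vext n (map_vec rat_of_int v)" using inv ve by simp
  finally show ?thesis .
qed

lemma ext1_vext:
  assumes M: "M \<in> carrier_mat (n+1) (n+1)" and w: "w \<in> carrier_vec (n+1)"
  shows "ext1 n M *\<^sub>v vext n w = vext n (M *\<^sub>v (w :: rat vec))"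
proof (rule eq_vecI)
  show "dim_vec (ext1 n M *\<^sub>v vext n w) = dim_vec (vext n (M *\<^sub>v w))"
    using ext1_carrier[OF M] by (simp add: vext_def)
  fix i assume "i < dim_vec (vext n (M *\<^sub>v w))"
  then have i: "i < n+2" by (simp add: vext_def)
  have "(ext1 n M *\<^sub>v vext n w) $ i = (\<Sum>j\<in>{0..<n+2}. ext1 n M $$ (i,j) * vext n w $ j)"
    using i ext1_carrier[OF M] by (simp add: vext_def scalar_prod_def)
  also have "\<dots> = (\<Sum>j\<in>{0..<n+1}. ext1 n M $$ (i,j) * vext n w $ j)"
    by (simp add: vext_def)
  also have "\<dots> = (if i < n+1 then (\<Sum>j\<in>{0..<n+1}. M $$ (i,j) * w $ j) else 0)"
    using i M by (auto intro!: sum.cong simp: vext_def ext1_def)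
  also have "\<dots> = vext n (M *\<^sub>v w) $ i"
    using i M w by (simp add: vext_def scalar_prod_def)
  finally show "(ext1 n M *\<^sub>v vext n w) $ i = vext n (M *\<^sub>v w) $ i" .
qed

lemma Amat_Abar:
  assumes v: "v \<in> carrier_vec (n+1)"
  shows "Amat Abar c (Suc n) *\<^sub>v map_vec rat_of_int (Abar n *\<^sub>v v)
     = vext n (Amat Abar c n *\<^sub>v map_vec rat_of_int v)"
proof -
  have "Amat Abar c (Suc n) *\<^sub>v map_vec rat_of_int (Abar n *\<^sub>v v)
     = ext1 n (Amat Abar c n) *\<^sub>v (minv (Acomp Abar c n) *\<^sub>v map_vec rat_of_int (Abar n *\<^sub>v v))"
    unfolding Amat_Suc
    using ext1_carrier[OF Amat_carrier[of n]] minv_carrier[of n] mult_mat_vec_carrier[OF dims[of n] v]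
    by (intro assoc_mult_mat_vec[of _ "n+2" "n+2" _ "n+2"], auto)
  also have "\<dots> = vext n (Amat Abar c n *\<^sub>v map_vec rat_of_int v)"
    unfolding minv_Abar[OF v] using Amat_carrier[of n] v
    by (intro ext1_vext, auto)
  finally show ?thesis .
qed

lemma Rmap_vext:
  assumes w: "w \<in> carrier_vec (n+1)"
  shows "Rmap E (Suc n) (vext n w) x = Rmap E n w x"
  unfolding Rmap_def using w by (simp add: vext_def)

lemma Phi_Suc:
  assumes v: "v \<in> carrier_vec (n+1)"
  shows "Phi Abar c E (Suc n) (Abar n *\<^sub>v v) = Phi Abar c E n v"
proof -
  have "Amat Abar c n *\<^sub>v map_vec rat_of_int v \<in> carrier_vec (n+1)"
    by (rule mult_mat_vec_carrier[OF Amat_carrier], use v in simp)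
  then show ?thesis
  unfolding Phi_def
  using Amat_Abar[OF v] Rmap_vext[of "Amat Abar c n *\<^sub>v map_vec rat_of_int v" n]
  by (auto simp: fun_eq_iff)
qed

lemma phi_iter_carrier: "v \<in> carrier_vec (n+1) \<Longrightarrow> phi_iter Abar n k v \<in> carrier_vec (n+k+1)"
proof (induction k)
  case (Suc k)
  then show ?case using mult_mat_vec_carrier[OF dims[of "n+k"] Suc.IH[OF Suc.prems]] by simp
qed simp

lemma phi_iter_add: "phi_iter Abar n (a+b) v = phi_iter Abar (n+a) b (phi_iter Abar n a v)"
  by (induction b) (auto simp: add.assoc)

lemma Phi_iter:
  assumes v: "v \<in> carrier_vec (n+1)"
  shows "Phi Abar c E (n+k) (phi_iter Abar n k v) = Phi Abar c E n v"
proof (induction k)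
  case (Suc k)
  have "Phi Abar c E (n + Suc k) (phi_iter Abar n (Suc k) v)
     = Phi Abar c E (Suc (n+k)) (Abar (n+k) *\<^sub>v phi_iter Abar n k v)" by simp
  also have "\<dots> = Phi Abar c E (n+k) (phi_iter Abar n k v)"
    by (rule Phi_Suc, rule phi_iter_carrier[OF v])
  finally show ?case using Suc by simp
qed simp

end

lemma nat_sum_one_unique:
  fixes f :: "'a \<Rightarrow> nat"
  assumes "finite A" "sum f A = 1" "j \<in> A" "j' \<in> A" "0 < f j" "0 < f j'"
  shows "j = j'"
proof (rule ccontr)
  assume ne: "j \<noteq> j'"
  have "sum f {j, j'} \<le> sum f A" using assms by (intro sum_mono2) auto
  then show False using ne assms by simp
qed

lemma nat_sum_one_le: 
  fixes f :: "'a \<Rightarrow> nat"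
  assumes "finite A" "sum f A = 1" "j \<in> A" shows "f j \<le> 1"
  using member_le_sum[of j A f] assms by simp

lemma nat_sum_one_ex:
  fixes f :: "'a \<Rightarrow> nat"
  assumes "finite A" "sum f A = 1"
  shows "\<exists>a\<in>A. f a = 1 \<and> (\<forall>j\<in>A. j \<noteq> a \<longrightarrow> f j = 0)"
proof -
  obtain a where a: "a \<in> A" "0 < f a" using assms sum_eq_0_iff[of A f] by fastforce
  have "sum f A = f a + sum f (A - {a})" using assms a by (simp add: sum.remove)
  then have s1: "f a + sum f (A - {a}) = 1" using assms(2) by simp
  then have fa: "f a = 1" and r: "sum f (A - {a}) = 0" using a(2) by linarith+
  have "\<forall>j\<in>A. j \<noteq> a \<longrightarrow> f j = 0" using r sum_eq_0_iff[of "A - {a}" f] assms(1) by simp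
  then show ?thesis using fa a(1) by blast
qed

context setupS begin

lemma Erow: "i \<le> n+1 \<Longrightarrow> (\<Sum>j\<le>n. E n i j) = 1"
  using red unfolding minimal_reduction_def by blast

lemma Eemit: "j \<le> n \<Longrightarrow> \<exists>i\<le>n+1. 0 < E n i j"
  using red unfolding minimal_reduction_def by blast

lemma Eparent_unique: "i \<le> n+1 \<Longrightarrow> j \<le> n \<Longrightarrow> j' \<le> n \<Longrightarrow> 0 < E n i j \<Longrightarrow> 0 < E n i j' \<Longrightarrow> j = j'"
  using nat_sum_one_unique[OF _ Erow] by auto

lemma Ele1: "i \<le> n+1 \<Longrightarrow> j \<le> n \<Longrightarrow> E n i j \<le> 1"
  using nat_sum_one_le[OF _ Erow] by auto

lemma Eparent_ex: "i \<le> n+1 \<Longrightarrow> \<exists>j\<le>n. 0 < E n i j"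
  using Erow[of i n] sum_eq_0_iff[of "{..n}" "E n i"] by fastforce

lemma XminD: assumes "x \<in> Xmin E" shows "x 0 = 0" "x n \<le> n" "0 < E n (x (Suc n)) (x n)"
  using assms unfolding Xmin_def by auto

lemma Xmin_ancestry:
  assumes x: "x \<in> Xmin E" and y: "y \<in> Xmin E" and eq: "x n = y n"
  shows "l \<le> n \<Longrightarrow> x l = y l"
proof -
  have main: "x (n-d) = y (n-d)" if "d \<le> n" for d
    using that
  proof (induction d)
    case 0 then show ?case using eq by simp
  next
    case (Suc d)
    define l where "l = n - Suc d"
    have l: "Suc l = n - d" using Suc.prems unfolding l_def by simp
    have e: "x (Suc l) = y (Suc l)" using Suc.IH Suc.prems l by simp
    have b: "x (Suc l) \<le> l + 1" using XminD(2)[OF x, of "Suc l"] by simp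
    have p1: "0 < E l (x (Suc l)) (x l)" by (rule XminD(3)[OF x])
    have p2: "0 < E l (x (Suc l)) (y l)" using XminD(3)[OF y, of l] e by simp
    have "x l = y l" by (rule Eparent_unique[OF b XminD(2)[OF x] XminD(2)[OF y] p1 p2])
    then show ?case unfolding l_def .
  qed
  assume "l \<le> n"
  then show "x l = y l" using main[of "n-l"] by simp
qed

definition svec :: "nat \<Rightarrow> nat \<Rightarrow> nat" where
  "svec m j = (\<Sum>i\<le>m+1. E m i j)"

lemma svec_total: "(\<Sum>j\<le>m. svec m j) = m + 2"
proof -
  have "(\<Sum>j\<le>m. svec m j) = (\<Sum>i\<le>m+1. \<Sum>j\<le>m. E m i j)"
    unfolding svec_def by (rule sum.swap)
  also have "\<dots> = (\<Sum>i\<le>m+1. 1)" by (rule sum.cong, auto simp: Erow)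
  finally show ?thesis by simp
qed

lemma svec_pos: "j \<le> m \<Longrightarrow> 1 \<le> svec m j"
proof -
  assume "j \<le> m"
  then obtain i where i: "i \<le> m+1" "0 < E m i j" using Eemit by blast
  then show "1 \<le> svec m j" unfolding svec_def using member_le_sum[of i "{..m+1}" "\<lambda>i. E m i j"] by simp
qed

lemma svec_struct: "\<exists>a\<le>m. svec m a = 2 \<and> (\<forall>j\<le>m. j \<noteq> a \<longrightarrow> svec m j = 1)"
proof -
  have "(\<Sum>j\<le>m. svec m j - 1) = (\<Sum>j\<le>m. svec m j) - (\<Sum>j\<le>m. (1::nat))"
    by (rule sum_subtractf_nat, use svec_pos in auto)
  also have "\<dots> = 1" using svec_total by simp
  finally obtain a where "a \<le> m" "svec m a - 1 = 1" "\<forall>j\<le>m. j \<noteq> a \<longrightarrow> svec m j - 1 = 0"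
    using nat_sum_one_ex[of "{..m}" "\<lambda>j. svec m j - 1"] by auto
  moreover have "svec m j = 1" if "j \<le> m" "j \<noteq> a" "\<forall>j\<le>m. j \<noteq> a \<longrightarrow> svec m j - 1 = 0" for j
    using svec_pos[of j m] that by force
  ultimately show ?thesis using svec_pos[of a m] by (intro exI[of _ a]) auto
qed

lemma a_seq_prop:
  "a_seq E (Suc m) \<le> m \<and> svec m (a_seq E (Suc m)) = 2 \<and>
   (\<forall>j\<le>m. j \<noteq> a_seq E (Suc m) \<longrightarrow> svec m j = 1)"
proof -
  obtain a where a: "a \<le> m" "svec m a = 2" "\<forall>j\<le>m. j \<noteq> a \<longrightarrow> svec m j = 1"
    using svec_struct by blast
  have "a_seq E (Suc m) = a"
    unfolding a_seq_def
  proof (rule the_equality)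
    show "a \<le> Suc m - 1 \<and> 2 \<le> (\<Sum>i\<le>Suc m. E (Suc m - 1) i a)"
      using a unfolding svec_def by simp
    fix b assume "b \<le> Suc m - 1 \<and> 2 \<le> (\<Sum>i\<le>Suc m. E (Suc m - 1) i b)"
    then show "b = a" using a unfolding svec_def by force
  qed
  then show ?thesis using a by simp
qed

definition childs :: "nat \<Rightarrow> nat \<Rightarrow> nat set" where
  "childs m j = {i. i \<le> m+1 \<and> 0 < E m i j}"

lemma svec_card: "svec m j = card (childs m j)" if "j \<le> m"
proof -
  have "svec m j = (\<Sum>i\<in>childs m j. E m i j)"
    unfolding svec_def childs_def by (rule sum.mono_neutral_right, auto)
  also have "\<dots> = (\<Sum>i\<in>childs m j. 1)"
    using Ele1 that by (intro sum.cong, auto simp: childs_def, fastforce)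
  finally show ?thesis by simp
qed

lemma childs_a: "\<exists>p q. childs m (a_seq E (Suc m)) = {p, q} \<and> p \<noteq> q"
  using a_seq_prop[of m] svec_card[of "a_seq E (Suc m)" m] card_2_iff by auto

lemma childs_other: "j \<le> m \<Longrightarrow> j \<noteq> a_seq E (Suc m) \<Longrightarrow> \<exists>p. childs m j = {p}"
  using a_seq_prop[of m] svec_card[of j m] card_1_singletonE by metis

lemma r_seq_child: "r_seq E (Suc m) \<in> childs m (a_seq E (Suc m))"
proof -
  obtain p q where pq: "childs m (a_seq E (Suc m)) = {p, q}" "p \<noteq> q" using childs_a by blast
  have "p \<le> Suc m \<and> 0 < E m p (a_seq E (Suc m))" using pq(1) unfolding childs_def by auto
  then have "r_seq E (Suc m) \<le> Suc m \<and> 0 < E m (r_seq E (Suc m)) (a_seq E (Suc m))"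
    unfolding r_seq_def by (simp, rule GreatestI_nat, auto)
  then show ?thesis unfolding childs_def by simp
qed

lemma r_seq_other: "\<exists>r'. r' \<in> childs m (a_seq E (Suc m)) \<and> r' \<noteq> r_seq E (Suc m) \<and>
   childs m (a_seq E (Suc m)) = {r_seq E (Suc m), r'}"
proof -
  obtain p q where pq: "childs m (a_seq E (Suc m)) = {p, q}" "p \<noteq> q" using childs_a by blast
  then show ?thesis using r_seq_child[of m] by auto
qed

end

context setupS begin

definition valid :: "(nat \<Rightarrow> nat) \<Rightarrow> nat \<Rightarrow> bool" where
  "valid p m \<longleftrightarrow> p 0 = 0 \<and> (\<forall>l<m. p l \<le> l \<and> 0 < E l (p (Suc l)) (p l)) \<and> p m \<le> m"

definition ch :: "nat \<Rightarrow> nat \<Rightarrow> nat" where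
  "ch n j = (SOME i. i \<le> n+1 \<and> 0 < E n i j)"

lemma ch: "j \<le> n \<Longrightarrow> ch n j \<le> n+1 \<and> 0 < E n (ch n j) j"
  unfolding ch_def by (rule someI_ex, rule Eemit)

primrec extp :: "(nat \<Rightarrow> nat) \<Rightarrow> nat \<Rightarrow> nat \<Rightarrow> nat" where
  "extp p m 0 = p 0"
| "extp p m (Suc l) = (if Suc l \<le> m then p (Suc l) else ch l (extp p m l))"

lemma extp_eq: "l \<le> m \<Longrightarrow> extp p m l = p l"
  by (cases l) auto

lemma valid_le: assumes v: "valid p m" and l: "l \<le> m" shows "p l \<le> l"
proof (cases "l < m")
  case True
  have "\<forall>l<m. p l \<le> l \<and> 0 < E l (p (Suc l)) (p l)" using v unfolding valid_def by (elim conjE)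
  then show ?thesis using True by blast
next
  case False
  then have "l = m" using l by simp
  moreover have "p m \<le> m" using v unfolding valid_def by (elim conjE)
  ultimately show ?thesis by simp
qed

lemma valid_E: assumes v: "valid p m" and l: "l < m" shows "0 < E l (p (Suc l)) (p l)"
proof -
  have "\<forall>l<m. p l \<le> l \<and> 0 < E l (p (Suc l)) (p l)" using v unfolding valid_def by (elim conjE)
  then show ?thesis using l by blast
qed

lemma extp_le: assumes "valid p m" shows "extp p m l \<le> l"
proof (induction l)
  case 0 then show ?case using valid_le[OF assms, of 0] by simp
next
  case (Suc l)
  show ?case
  proof (cases "Suc l \<le> m")
    case True
    then have "p (Suc l) \<le> Suc l" using valid_le[OF assms] by blast
    then show ?thesis using True by simp
  next
    case False then show ?thesis using ch[OF Suc.IH] by simp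
  qed
qed

lemma extp_Xmin: assumes "valid p m" shows "extp p m \<in> Xmin E"
  unfolding Xmin_def
proof (intro CollectI conjI allI)
  show "extp p m 0 = 0" using assms by (simp add: valid_def)
  fix n
  show "extp p m n \<le> n" by (rule extp_le[OF assms])
  show "0 < E n (extp p m (Suc n)) (extp p m n)"
  proof (cases "Suc n \<le> m")
    case True
    then have "0 < E n (p (Suc n)) (p n)" using valid_E[OF assms] by simp
    then show ?thesis using True extp_eq[of n m p] by simp
  next
    case False then show ?thesis using ch[OF extp_le[OF assms, of n]] by simp
  qed
qed

lemma valid_upd:
  assumes "valid p m" "i \<le> Suc m" "0 < E m i (p m)"
  shows "valid (p(Suc m := i)) (Suc m)"
proof -
  let ?q = "p(Suc m := i)"
  have a: "?q 0 = 0" using assms(1) unfolding valid_def by simp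
  have b: "?q l \<le> l \<and> 0 < E l (?q (Suc l)) (?q l)" if "l < Suc m" for l
  proof (cases "l = m")
    case True
    have "?q m = p m" "?q (Suc m) = i" by simp_all
    then show ?thesis using True assms(3) valid_le[OF assms(1), of m] by simp
  next
    case False then have "l < m" using that by simp
    have "?q l = p l" "?q (Suc l) = p (Suc l)" using \<open>l < m\<close> by simp_all
    then show ?thesis using valid_le[OF assms(1), of l] valid_E[OF assms(1) \<open>l < m\<close>] \<open>l < m\<close> by simp
  qed
  have c: "?q (Suc m) \<le> Suc m" using assms(2) by simp
  show ?thesis unfolding valid_def using a b c by blast
qed

lemma valid_back: "i \<le> m \<Longrightarrow> \<exists>p. valid p m \<and> p m = i"
proof (induction m arbitrary: i)
  case 0
  have "valid (\<lambda>_. 0) 0" unfolding valid_def by simp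
  then show ?case using 0 by (intro exI[of _ "\<lambda>_. 0"]) simp
next
  case (Suc m)
  obtain j where j: "j \<le> m" "0 < E m i j" using Eparent_ex[of i m] Suc.prems by auto
  obtain p where p: "valid p m" "p m = j" using Suc.IH[OF j(1)] by blast
  have e: "0 < E m i (p m)" unfolding p(2) by (rule j(2))
  have v: "valid (p(Suc m := i)) (Suc m)" by (rule valid_upd[OF p(1) Suc.prems e])
  have w: "(p(Suc m := i)) (Suc m) = i" by (rule fun_upd_same)
  show ?case by (rule exI[of _ "p(Suc m := i)"], rule conjI[OF v w])
qed

lemma B_nonempty: "i \<le> m \<Longrightarrow> \<exists>x\<in>Xmin E. x m = i"
proof -
  assume "i \<le> m"
  then obtain p where p: "valid p m" "p m = i" using valid_back by blast
  show ?thesis using extp_Xmin[OF p(1)] extp_eq[of m m p] p(2) by auto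
qed

lemma indep_paths: "\<exists>x y. x \<in> Xmin E \<and> y \<in> Xmin E \<and> (\<forall>l<Suc m. x l = y l)
   \<and> x (Suc m) = r_seq E (Suc m) \<and> y (Suc m) \<noteq> r_seq E (Suc m)"
proof -
  let ?a = "a_seq E (Suc m)" and ?r = "r_seq E (Suc m)"
  obtain p where p: "valid p m" "p m = ?a" using valid_back a_seq_prop[of m] by blast
  obtain r' where r': "r' \<in> childs m ?a" "r' \<noteq> ?r" using r_seq_other by blast
  have r: "?r \<in> childs m ?a" by (rule r_seq_child)
  have v1: "valid (p(Suc m := ?r)) (Suc m)" using r p by (intro valid_upd) (auto simp: childs_def)
  have v2: "valid (p(Suc m := r')) (Suc m)" using r' p by (intro valid_upd) (auto simp: childs_def)
  show ?thesis
    apply (rule exI[of _ "extp (p(Suc m := ?r)) (Suc m)"], rule exI[of _ "extp (p(Suc m := r')) (Suc m)"])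
    using extp_Xmin[OF v1] extp_Xmin[OF v2] extp_eq[of _ "Suc m"] r' by auto
qed

lemma chiB_rat: "(chiB i n x :: rat) = (if x n = i then 1 else 0)" by (simp add: chiB_def)
lemma chiB_int: "(chiB i n x :: int) = (if x n = i then 1 else 0)" by (simp add: chiB_def)

lemma r_seq_0: "r_seq E 0 = 0" by (simp add: r_seq_def)

lemma Rmap_indep:
  assumes a: "\<alpha> \<in> carrier_vec (n+1)" and z: "\<forall>x\<in>Xmin E. Rmap E n \<alpha> x = 0"
  shows "\<alpha> = 0\<^sub>v (n+1)"
proof -
  have "\<forall>l. k \<le> l \<and> l \<le> n \<longrightarrow> \<alpha> $ l = 0" if "k \<le> n+1" for k
    using that
  proof (induction k rule: inc_induct)
    case base then show ?case by auto
  next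
    case (step k)
    have ak: "\<alpha> $ k = 0"
    proof (cases k)
      case 0
      obtain x where x: "x \<in> Xmin E" "x 0 = 0" using B_nonempty[of 0 0] by auto
      have "0 = Rmap E n \<alpha> x" using z x by simp
      also have "\<dots> = (\<Sum>l\<le>n. if l = 0 then \<alpha> $ 0 else 0)"
        unfolding Rmap_def using step.IH 0 x by (intro sum.cong) (auto simp: chiB_rat r_seq_0)
      also have "\<dots> = \<alpha> $ 0" by simp
      finally show ?thesis using 0 by simp
    next
      case (Suc m)
      obtain x y where xy: "x \<in> Xmin E" "y \<in> Xmin E" "\<forall>l<Suc m. x l = y l"
        "x (Suc m) = r_seq E (Suc m)" "y (Suc m) \<noteq> r_seq E (Suc m)"
        using indep_paths[of m] by blast
      have cl: "\<alpha> $ l = 0 \<or> x l = y l" if "l \<noteq> k" "l \<le> n" for l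
      proof (cases "l < k")
        case True then show ?thesis using xy(3) Suc by simp
      next
        case False then show ?thesis using step.IH that by simp
      qed
      have "0 = Rmap E n \<alpha> x - Rmap E n \<alpha> y" using z xy by simp
      also have "\<dots> = (\<Sum>l\<le>n. \<alpha> $ l * (chiB (r_seq E l) l x - chiB (r_seq E l) l y))"
        unfolding Rmap_def by (simp add: sum_subtractf algebra_simps)
      also have "(\<Sum>l\<le>n. \<alpha> $ l * (chiB (r_seq E l) l x - chiB (r_seq E l) l y)) = (\<Sum>l\<le>n. if l = k then \<alpha> $ k else 0)"
      proof (rule sum.cong)
        fix l assume "l \<in> {..n}"
        then show "\<alpha> $ l * (chiB (r_seq E l) l x - chiB (r_seq E l) l y) = (if l = k then \<alpha> $ k else 0)"
          using cl[of l] xy Suc by (cases "l = k") (auto simp: chiB_rat)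
      qed simp
      also have "\<dots> = \<alpha> $ k" using step.hyps by simp
      finally show ?thesis by simp
    qed
    show ?case
    proof (intro allI impI)
      fix l assume l: "k \<le> l \<and> l \<le> n"
      show "\<alpha> $ l = 0"
      proof (cases "l = k")
        case True then show ?thesis using ak by simp
      next
        case False then have "Suc k \<le> l" using l by simp
        then show ?thesis using step.IH l by blast
      qed
    qed
  qed
  then have "\<forall>l. l \<le> n \<longrightarrow> \<alpha> $ l = 0" by auto
  then show ?thesis using a by (intro eq_vecI) auto
qed

end

context setupS begin

definition inspan :: "nat \<Rightarrow> ((nat \<Rightarrow> nat) \<Rightarrow> int) \<Rightarrow> bool" where
  "inspan n f \<longleftrightarrow> (\<exists>\<beta>::nat \<Rightarrow> int. \<forall>x\<in>Xmin E. f x = (\<Sum>l\<le>n. \<beta> l * chiB (r_seq E l) l x))"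

lemma inspan_step:
  assumes "inspan n f"
  shows "inspan (Suc n) (\<lambda>x. f x + t * chiB (r_seq E (Suc n)) (Suc n) x)"
proof -
  obtain \<beta> where b: "\<forall>x\<in>Xmin E. f x = (\<Sum>l\<le>n. \<beta> l * chiB (r_seq E l) l x)"
    using assms unfolding inspan_def by blast
  have "f x + t * chiB (r_seq E (Suc n)) (Suc n) x = (\<Sum>l\<le>Suc n. (\<beta>(Suc n := t)) l * chiB (r_seq E l) l x)"
    if x: "x \<in> Xmin E" for x
  proof -
    have "(\<Sum>l\<le>n. (\<beta>(Suc n := t)) l * chiB (r_seq E l) l x) = (\<Sum>l\<le>n. \<beta> l * chiB (r_seq E l) l x)"
      by (intro sum.cong) auto
    then show ?thesis using b x by simp
  qed
  then show ?thesis unfolding inspan_def by blast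
qed

lemma inspan_cong: "inspan n g \<Longrightarrow> \<forall>x\<in>Xmin E. f x = g x \<Longrightarrow> inspan n f"
proof -
  assume g: "inspan n g" and fg: "\<forall>x\<in>Xmin E. f x = g x"
  obtain \<beta> where b: "\<forall>x\<in>Xmin E. g x = (\<Sum>l\<le>n. \<beta> l * chiB (r_seq E l) l x)"
    using g unfolding inspan_def by blast
  have "\<forall>x\<in>Xmin E. f x = (\<Sum>l\<le>n. \<beta> l * chiB (r_seq E l) l x)"
  proof
    fix x assume "x \<in> Xmin E" then show "f x = (\<Sum>l\<le>n. \<beta> l * chiB (r_seq E l) l x)"
      using b fg by simp
  qed
  then show ?thesis unfolding inspan_def by blast
qed

lemma inspan_zero: "inspan n (\<lambda>x. 0)"
  unfolding inspan_def by (rule exI[of _ "\<lambda>_. 0"]) simp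

lemma xchild: "x \<in> Xmin E \<Longrightarrow> x (Suc n) \<in> childs n (x n)"
  unfolding childs_def using XminD(2)[of x "Suc n"] XminD(3)[of x n] by simp

lemma childs_uniq: "k \<in> childs n j \<Longrightarrow> k \<in> childs n j' \<Longrightarrow> j \<le> n \<Longrightarrow> j' \<le> n \<Longrightarrow> j = j'"
  unfolding childs_def using Eparent_unique by blast

lemma span_chi: "i \<le> n \<Longrightarrow> inspan n (chiB i n)"
proof (induction n arbitrary: i)
  case 0
  then have i: "i = 0" by simp
  show ?case unfolding inspan_def i
    by (rule exI[of _ "\<lambda>_. 1"]) (simp add: r_seq_0)
next
  case (Suc n)
  let ?a = "a_seq E (Suc n)" and ?r = "r_seq E (Suc n)"
  have a: "?a \<le> n" using a_seq_prop[of n] by simp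
  have r: "?r \<in> childs n ?a" by (rule r_seq_child)
  show ?case
  proof (cases "i = ?r")
    case True
    show ?thesis
      by (rule inspan_cong[OF inspan_step[OF inspan_zero, of n 1]]) (simp add: True)
  next
    case False
    obtain j where j: "j \<le> n" "0 < E n i j" using Eparent_ex[of i n] Suc.prems by auto
    have ij: "i \<in> childs n j" unfolding childs_def using j Suc.prems by simp
    show ?thesis
    proof (cases "j = ?a")
      case False
      obtain p where p: "childs n j = {p}" using childs_other[OF j(1) False] by blast
      have "(chiB i (Suc n) x :: int) = chiB j n x + 0 * chiB ?r (Suc n) x" if x: "x \<in> Xmin E" for x
      proof -
        have xn: "x n \<le> n" by (rule XminD(2)[OF x])
        have "x (Suc n) = i \<longleftrightarrow> x n = j"
        proof
          assume "x (Suc n) = i"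
          then have "i \<in> childs n (x n)" using xchild[OF x, of n] by simp
          then show "x n = j" using childs_uniq[OF _ ij xn j(1)] by simp
        next
          assume "x n = j"
          then have "x (Suc n) \<in> childs n j" using xchild[OF x, of n] by simp
          then show "x (Suc n) = i" using ij p by simp
        qed
        then show ?thesis by (simp add: chiB_int)
      qed
      then show ?thesis
        by (intro inspan_cong[OF inspan_step[OF Suc.IH[OF j(1)], of 0]]) blast
    next
      case True
      obtain r' where r': "childs n ?a = {?r, r'}" using r_seq_other[of n] by blast
      have "(chiB i (Suc n) x :: int) = chiB ?a n x + (-1) * chiB ?r (Suc n) x" if x: "x \<in> Xmin E" for x
      proof -
        have xn: "x n \<le> n" by (rule XminD(2)[OF x])
        have xc: "x (Suc n) \<in> childs n (x n)" by (rule xchild[OF x])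
        show ?thesis
        proof (cases "x (Suc n) = i")
          case True
          then have "x n = ?a" using childs_uniq[OF _ ij xn j(1)] xc \<open>j = ?a\<close> by simp
          then show ?thesis using True \<open>i \<noteq> ?r\<close> by (simp add: chiB_int)
        next
          case False
          show ?thesis
          proof (cases "x n = ?a")
            case True
            then have "x (Suc n) \<in> {?r, r'}" using xc r' by simp
            moreover have "i \<in> {?r, r'}" using ij \<open>j = ?a\<close> r' by simp
            ultimately have "x (Suc n) = ?r" using False \<open>i \<noteq> ?r\<close> by auto
            then show ?thesis using True False by (simp add: chiB_int)
          next
            case xa: False
            have "x (Suc n) \<noteq> ?r"
            proof
              assume "x (Suc n) = ?r"
              then have "?r \<in> childs n (x n)" using xc by simp
              then show False using childs_uniq[OF _ r xn a] xa by simp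
            qed
            then show ?thesis using xa False by (simp add: chiB_int)
          qed
        qed
      qed
      then show ?thesis
        using inspan_cong[OF inspan_step[OF Suc.IH[OF a], of "-1"]] by blast
    qed
  qed
qed

lemma inspan_rep:
  assumes unif: "\<forall>x\<in>Xmin E. \<forall>y\<in>Xmin E. (\<forall>l\<le>n. x l = y l) \<longrightarrow> f x = f y"
  shows "inspan n f"
proof -
  have "\<forall>i. \<exists>x. i \<le> n \<longrightarrow> x \<in> Xmin E \<and> x n = i"
  proof
    fix i show "\<exists>x. i \<le> n \<longrightarrow> x \<in> Xmin E \<and> x n = i"
    proof (cases "i \<le> n")
      case True
      then obtain x where "x \<in> Xmin E" "x n = i" using B_nonempty[of i n] by blast
      then show ?thesis by blast
    qed simp
  qed
  from choice[OF this] obtain pt where pt0: "\<forall>i. i \<le> n \<longrightarrow> pt i \<in> Xmin E \<and> pt i n = i" by blast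
  have pt: "pt i \<in> Xmin E \<and> pt i n = i" if "i \<le> n" for i using pt0 that by blast
  have "\<forall>i. \<exists>\<beta>. i \<le> n \<longrightarrow> (\<forall>x\<in>Xmin E. (chiB i n x :: int) = (\<Sum>l\<le>n. \<beta> l * chiB (r_seq E l) l x))"
  proof
    fix i show "\<exists>\<beta>. i \<le> n \<longrightarrow> (\<forall>x\<in>Xmin E. (chiB i n x :: int) = (\<Sum>l\<le>n. \<beta> l * chiB (r_seq E l) l x))"
    proof (cases "i \<le> n")
      case True
      then obtain \<beta> where "\<forall>x\<in>Xmin E. (chiB i n x :: int) = (\<Sum>l\<le>n. \<beta> l * chiB (r_seq E l) l x)"
        using span_chi[of i n] unfolding inspan_def by blast
      then show ?thesis by blast
    qed simp
  qed
  from choice[OF this] obtain B where B0: "\<forall>i. i \<le> n \<longrightarrow> (\<forall>x\<in>Xmin E. (chiB i n x :: int) = (\<Sum>l\<le>n. B i l * chiB (r_seq E l) l x))"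
    by blast
  have B: "(chiB i n x :: int) = (\<Sum>l\<le>n. B i l * chiB (r_seq E l) l x)" if "i \<le> n" "x \<in> Xmin E" for i x
    using B0 that by blast
  have "f x = (\<Sum>l\<le>n. (\<Sum>i\<le>n. f (pt i) * B i l) * chiB (r_seq E l) l x)" if x: "x \<in> Xmin E" for x
  proof -
    have xn: "x n \<le> n" by (rule XminD(2)[OF x])
    have y: "pt (x n) \<in> Xmin E" "pt (x n) n = x n" using pt[OF xn] by auto
    have xe: "x n = pt (x n) n" using y(2) by (rule sym)
    have "\<forall>l\<le>n. x l = pt (x n) l" using Xmin_ancestry[OF x y(1) xe] by blast
    then have "f x = f (pt (x n))" using unif x y(1) by blast
    also have "\<dots> = (\<Sum>i\<le>n. if i = x n then f (pt i) else 0)" using xn by simp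
    also have "\<dots> = (\<Sum>i\<le>n. f (pt i) * chiB i n x)" by (intro sum.cong) (auto simp: chiB_int)
    also have "\<dots> = (\<Sum>i\<le>n. f (pt i) * (\<Sum>l\<le>n. B i l * chiB (r_seq E l) l x))"
      by (rule sum.cong[OF refl]) (simp add: B[OF _ x])
    also have "\<dots> = (\<Sum>i\<le>n. \<Sum>l\<le>n. f (pt i) * B i l * chiB (r_seq E l) l x)"
      by (simp add: sum_distrib_left mult.assoc)
    also have "\<dots> = (\<Sum>l\<le>n. \<Sum>i\<le>n. f (pt i) * B i l * chiB (r_seq E l) l x)"
      by (rule sum.swap)
    also have "\<dots> = (\<Sum>l\<le>n. (\<Sum>i\<le>n. f (pt i) * B i l) * chiB (r_seq E l) l x)"
      by (simp add: sum_distrib_right)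
    finally show ?thesis .
  qed
  then show ?thesis unfolding inspan_def
    by (intro exI[of _ "\<lambda>l. \<Sum>i\<le>n. f (pt i) * B i l"]) blast
qed

end

definition cylI :: "(nat \<Rightarrow> nat) \<Rightarrow> nat set \<Rightarrow> (nat \<Rightarrow> nat) set" where
  "cylI y I = {z. \<forall>l\<in>I. z l = y l}"

lemma cylI_open: "finite I \<Longrightarrow> open (cylI y I)"
proof -
  assume I: "finite I"
  have "cylI y I = {f. \<forall>i\<in>I. f (id i) \<in> {y i}}" unfolding cylI_def by auto
  moreover have "open {f::nat\<Rightarrow>nat. \<forall>i\<in>I. f (id i) \<in> {y i}}"
    by (rule product_topology_basis'[OF I], rule open_discrete)
  ultimately show ?thesis by simp
qed

lemma open_contains_cyl:
  assumes A: "open (A :: (nat \<Rightarrow> nat) set)" and y: "y \<in> A"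
  shows "\<exists>N. cylI y {..N} \<subseteq> A"
proof -
  have "openin (product_topology (\<lambda>i. euclidean) UNIV) A" using A unfolding open_fun_def .
  from product_topology_open_contains_basis[OF this y] obtain X where
    X: "y \<in> (\<Pi>\<^sub>E i\<in>UNIV. X i)" "finite {i. X i \<noteq> topspace euclidean}" "(\<Pi>\<^sub>E i\<in>UNIV. X i) \<subseteq> A"
    by blast
  define F where "F = {i. X i \<noteq> UNIV}"
  have F: "finite F" using X(2) unfolding F_def by simp
  define N where "N = Max (insert 0 F)"
  have "cylI y {..N} \<subseteq> (\<Pi>\<^sub>E i\<in>UNIV. X i)"
  proof
    fix z assume z: "z \<in> cylI y {..N}"
    have "z i \<in> X i" for i
    proof (cases "i \<in> F")
      case True
      then have "i \<le> N" unfolding N_def using F by simp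
      then have "z i = y i" using z unfolding cylI_def by simp
      then show ?thesis using X(1) by auto
    next
      case False then show ?thesis unfolding F_def by simp
    qed
    then show "z \<in> (\<Pi>\<^sub>E i\<in>UNIV. X i)" by auto
  qed
  then show ?thesis using X(3) by blast
qed

lemma closed_dep:
  assumes I: "finite I" and dep: "\<And>x z. (\<forall>l\<in>I. x l = z l) \<Longrightarrow> x \<in> S \<Longrightarrow> z \<in> (S :: (nat \<Rightarrow> nat) set)"
  shows "closed S"
  unfolding closed_def
proof (subst open_subopen, intro ballI)
  fix y assume y: "y \<in> - S"
  have "cylI y I \<subseteq> - S"
  proof
    fix z assume "z \<in> cylI y I"
    then have "\<forall>l\<in>I. z l = y l" unfolding cylI_def by simp
    then show "z \<in> - S" using dep[of z y] y by auto
  qed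
  moreover have "y \<in> cylI y I" unfolding cylI_def by simp
  ultimately show "\<exists>T. open T \<and> y \<in> T \<and> T \<subseteq> - S" using cylI_open[OF I] by blast
qed

lemma chiB_cont: "continuous_on S (\<lambda>x. (chiB i n x :: int))"
proof -
  have "(\<lambda>x. (chiB i n x :: int)) = (\<lambda>k::nat. if k = i then 1 else 0) \<circ> (\<lambda>x. x n)"
    by (auto simp: chiB_def fun_eq_iff)
  moreover have "continuous_on S (\<lambda>x::nat\<Rightarrow>nat. x n)"
    by (rule continuous_on_subset[OF continuous_on_product_coordinates], simp)
  ultimately show ?thesis
    by (metis continuous_on_compose continuous_on_discrete)
qed

context setupS begin

lemma Xmin_compact: "compact (Xmin E)"
proof -
  define K where "K = (\<Pi>\<^sub>E i\<in>(UNIV::nat set). {..i})"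
  have "compactin (product_topology (\<lambda>i. euclidean) UNIV) K"
    unfolding K_def compactin_PiE by (simp add: finite_imp_compact)
  then have cK: "compact K" unfolding euclidean_product_topology by simp
  define C where "C n = {x::nat\<Rightarrow>nat. x 0 = 0 \<and> 0 < E n (x (Suc n)) (x n)}" for n
  have cC: "closed (C n)" for n
    by (rule closed_dep[of "{0, n, Suc n}"], auto simp: C_def)
  have "Xmin E = K \<inter> (\<Inter>n. C n)"
    unfolding Xmin_def K_def C_def by (auto simp: PiE_UNIV_domain)
  moreover have "closed (\<Inter>n. C n)" using cC by (intro closed_INT) auto
  ultimately show ?thesis using compact_Int_closed[OF cK] by simp
qed

lemma unif_depth:
  assumes f: "continuous_on (Xmin E) (f :: (nat \<Rightarrow> nat) \<Rightarrow> int)"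
  shows "\<exists>N. \<forall>x\<in>Xmin E. \<forall>y\<in>Xmin E. (\<forall>l\<le>N. x l = y l) \<longrightarrow> f x = f y"
proof -
  have loc: "\<exists>N. \<forall>z\<in>Xmin E. z \<in> cylI x {..N} \<longrightarrow> f z = f x" if x: "x \<in> Xmin E" for x
  proof -
    have ob: "open {f x}" by (rule open_discrete)
    obtain A where A: "open A" "A \<inter> Xmin E = f -` {f x} \<inter> Xmin E"
      using f[unfolded continuous_on_open_invariant, rule_format, OF ob] by blast
    have "x \<in> f -` {f x} \<inter> Xmin E" using x by simp
    then have "x \<in> A" using A(2) by (metis IntD1)
    then obtain N where N: "cylI x {..N} \<subseteq> A" using open_contains_cyl[OF A(1)] by blast
    have "\<forall>z\<in>Xmin E. z \<in> cylI x {..N} \<longrightarrow> f z = f x"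
    proof (intro ballI impI)
      fix z assume "z \<in> Xmin E" "z \<in> cylI x {..N}"
      then have "z \<in> A \<inter> Xmin E" using N by blast
      then show "f z = f x" using A(2) by blast
    qed
    then show ?thesis by blast
  qed
  have "\<forall>x. \<exists>N. x \<in> Xmin E \<longrightarrow> (\<forall>z\<in>Xmin E. z \<in> cylI x {..N} \<longrightarrow> f z = f x)"
    using loc by blast
  from choice[OF this] obtain Nf where
    Nf: "\<forall>x. x \<in> Xmin E \<longrightarrow> (\<forall>z\<in>Xmin E. z \<in> cylI x {..Nf x} \<longrightarrow> f z = f x)" by blast
  have cov: "Xmin E \<subseteq> (\<Union>x\<in>Xmin E. cylI x {..Nf x})" unfolding cylI_def by blast
  obtain C' where C': "C' \<subseteq> Xmin E" "finite C'" "Xmin E \<subseteq> (\<Union>x\<in>C'. cylI x {..Nf x})"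
    by (rule compactE_image[OF Xmin_compact _ cov], rule cylI_open, simp)
  define N where "N = Max (insert 0 (Nf ` C'))"
  have "\<forall>y\<in>Xmin E. \<forall>z\<in>Xmin E. (\<forall>l\<le>N. y l = z l) \<longrightarrow> f y = f z"
  proof (intro ballI impI)
    fix y z assume y: "y \<in> Xmin E" and z: "z \<in> Xmin E" and yz: "\<forall>l\<le>N. y l = z l"
    obtain x where x: "x \<in> C'" "y \<in> cylI x {..Nf x}" using C'(3) y by blast
    have le: "Nf x \<le> N" unfolding N_def using C'(2) x(1) by simp
    have "z \<in> cylI x {..Nf x}" using x(2) yz le unfolding cylI_def by auto
    then have "f z = f x" using Nf C'(1) x(1) z by blast
    moreover have "f y = f x" using Nf C'(1) x y by blast
    ultimately show "f y = f z" by simp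
  qed
  then show ?thesis by blast
qed

end

lemma dep_cont:
  assumes dep: "\<And>x y. (\<forall>l\<le>N. x l = y l) \<Longrightarrow> g x = g y"
  shows "continuous_on S (g :: (nat \<Rightarrow> nat) \<Rightarrow> 'b::topological_space)"
proof -
  have "continuous_on UNIV g"
    unfolding continuous_on_open_invariant
  proof (intro allI impI)
    fix B :: "'b set" assume "open B"
    have "open (g -` B)"
    proof (subst open_subopen, intro ballI)
      fix y assume y: "y \<in> g -` B"
      have "cylI y {..N} \<subseteq> g -` B"
      proof
        fix z assume "z \<in> cylI y {..N}"
        then have "\<forall>l\<le>N. z l = y l" unfolding cylI_def by simp
        then have "g z = g y" by (rule dep)
        then show "z \<in> g -` B" using y by simp
      qed
      moreover have "y \<in> cylI y {..N}" unfolding cylI_def by simp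
      ultimately show "\<exists>T. open T \<and> y \<in> T \<and> T \<subseteq> g -` B" using cylI_open[of "{..N}" y] by blast
    qed
    then show "\<exists>A. open A \<and> A \<inter> UNIV = g -` B \<inter> UNIV" by blast
  qed
  then show ?thesis by (rule continuous_on_subset) simp
qed

context setupS begin

definition PhiI :: "nat \<Rightarrow> int vec \<Rightarrow> (nat \<Rightarrow> nat) \<Rightarrow> int" where
  "PhiI n v x = (if x \<in> Xmin E then (\<Sum>l\<le>n. (AmI n *\<^sub>v v) $ l * chiB (r_seq E l) l x) else 0)"

lemma Rmap_int:
  assumes u: "u \<in> carrier_vec (n+1)"
  shows "Rmap E n (map_vec rat_of_int u) x = rat_of_int (\<Sum>l\<le>n. u $ l * chiB (r_seq E l) l x)"
proof -
  have "Rmap E n (map_vec rat_of_int u) x = (\<Sum>l\<le>n. rat_of_int (u $ l * chiB (r_seq E l) l x))"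
    unfolding Rmap_def using u by (intro sum.cong) (auto simp: chiB_def)
  then show ?thesis by simp
qed

lemma Phi_PhiI:
  assumes v: "v \<in> carrier_vec (n+1)"
  shows "Phi Abar c E n v x = rat_of_int (PhiI n v x)"
proof -
  have "Amat Abar c n *\<^sub>v map_vec rat_of_int v = map_vec rat_of_int (AmI n *\<^sub>v v)"
    unfolding Amat_eq by (rule of_int_hom.mult_mat_vec_hom[OF AmI_carrier v, symmetric])
  moreover have "AmI n *\<^sub>v v \<in> carrier_vec (n+1)" using AmI_carrier[of n] v by simp
  ultimately show ?thesis unfolding Phi_def PhiI_def using Rmap_int by simp
qed

lemma PhiI_iter:
  assumes v: "v \<in> carrier_vec (n+1)"
  shows "PhiI (n+k) (phi_iter Abar n k v) = PhiI n v"
proof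
  fix x
  have "rat_of_int (PhiI (n+k) (phi_iter Abar n k v) x) = rat_of_int (PhiI n v x)"
    using Phi_PhiI[OF phi_iter_carrier[OF v, of k]] Phi_PhiI[OF v] Phi_iter[OF v, of k] by metis
  then show "PhiI (n+k) (phi_iter Abar n k v) x = PhiI n v x" by simp
qed

lemma PhiI_add:
  assumes a: "a \<in> carrier_vec (n+1)" and b: "b \<in> carrier_vec (n+1)"
  shows "PhiI n (a + b) x = PhiI n a x + PhiI n b x"
proof -
  have m: "AmI n *\<^sub>v (a + b) = AmI n *\<^sub>v a + AmI n *\<^sub>v b"
    by (rule mult_add_distrib_mat_vec[OF AmI_carrier a b])
  have "(\<Sum>l\<le>n. (AmI n *\<^sub>v (a + b)) $ l * chiB (r_seq E l) l x)
     = (\<Sum>l\<le>n. (AmI n *\<^sub>v a) $ l * chiB (r_seq E l) l x + (AmI n *\<^sub>v b) $ l * chiB (r_seq E l) l x)"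
    unfolding m using AmI_carrier[of n] a b by (intro sum.cong) (auto simp: distrib_right)
  then show ?thesis unfolding PhiI_def by (simp add: sum.distrib)
qed

lemma PhiI_CXZ:
  assumes v: "v \<in> carrier_vec (n+1)"
  shows "PhiI n v \<in> CXZ E"
proof -
  let ?g = "\<lambda>x. (\<Sum>l\<le>n. (AmI n *\<^sub>v v) $ l * (chiB (r_seq E l) l x :: int))"
  have "continuous_on (Xmin E) ?g"
  proof (rule dep_cont[of n])
    fix x y :: "nat \<Rightarrow> nat" assume xy: "\<forall>l\<le>n. x l = y l"
    show "?g x = ?g y" using xy by (intro sum.cong) (auto simp: chiB_def)
  qed
  then have "continuous_on (Xmin E) (PhiI n v)"
    by (rule continuous_on_cong[THEN iffD1, rotated 2]) (auto simp: PhiI_def)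
  then show ?thesis unfolding CXZ_def PhiI_def by simp
qed

lemma PhiI_inj:
  assumes a: "a \<in> carrier_vec (n+1)" and b: "b \<in> carrier_vec (n+1)"
    and eq: "PhiI n a = PhiI n b"
  shows "a = b"
proof -
  let ?u = "AmI n *\<^sub>v a - AmI n *\<^sub>v b"
  have u: "?u \<in> carrier_vec (n+1)"
    by (rule minus_carrier_vec[OF mult_mat_vec_carrier[OF AmI_carrier a] mult_mat_vec_carrier[OF AmI_carrier b]])
  have "\<forall>x\<in>Xmin E. Rmap E n (map_vec rat_of_int ?u) x = 0"
  proof
    fix x assume x: "x \<in> Xmin E"
    have "(\<Sum>l\<le>n. ?u $ l * chiB (r_seq E l) l x)
       = (\<Sum>l\<le>n. (AmI n *\<^sub>v a) $ l * chiB (r_seq E l) l x - (AmI n *\<^sub>v b) $ l * chiB (r_seq E l) l x)"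
      using AmI_carrier[of n] a b by (intro sum.cong) (auto simp: left_diff_distrib)
    also have "\<dots> = PhiI n a x - PhiI n b x" unfolding PhiI_def using x by (simp add: sum_subtractf)
    also have "\<dots> = 0" using eq by simp
    finally have s0: "(\<Sum>l\<le>n. ?u $ l * chiB (r_seq E l) l x) = 0" .
    show "Rmap E n (map_vec rat_of_int ?u) x = 0" by (simp only: Rmap_int[OF u] s0 of_int_0)
  qed
  then have "map_vec rat_of_int ?u = 0\<^sub>v (n+1)" using u by (intro Rmap_indep) auto
  then have mz: "map_vec rat_of_int ?u = 0\<^sub>v (n+1)" .
  have "?u = 0\<^sub>v (n+1)"
  proof (rule eq_vecI)
    fix i assume i: "i < dim_vec (0\<^sub>v (n+1) :: int vec)"
    have "map_vec rat_of_int ?u $ i = 0\<^sub>v (n+1) $ i" using mz by (rule arg_cong)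
    moreover have d: "i < dim_vec ?u"
    proof -
      have "dim_vec ?u = n+1" using u by (rule carrier_vecD)
      moreover have "i < n+1" using i by simp
      ultimately show ?thesis by simp
    qed
    ultimately have "rat_of_int (?u $ i) = 0" using i by (simp only: index_map_vec(1)[OF d]) simp
    then show "?u $ i = 0\<^sub>v (n+1) $ i" using i by simp
  qed (use u AmI_carrier[of n] in simp)
  then have u0: "AmI n *\<^sub>v (a - b) = 0\<^sub>v (n+1)"
    using AmI_carrier[of n] a b by (simp add: mult_minus_distrib_mat_vec)
  have adj: "adj_mat (AmI n) * AmI n = 1\<^sub>m (n+1)" "adj_mat (AmI n) \<in> carrier_mat (n+1) (n+1)"
    using adj_mat[OF AmI_carrier[of n]] det_AmI[of n] by auto
  have "a - b = (adj_mat (AmI n) * AmI n) *\<^sub>v (a - b)" using adj a b by simp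
  also have "\<dots> = adj_mat (AmI n) *\<^sub>v (AmI n *\<^sub>v (a - b))"
    using adj(2) AmI_carrier[of n] a b by (intro assoc_mult_mat_vec) auto
  also have "\<dots> = adj_mat (AmI n) *\<^sub>v 0\<^sub>v (n+1)" using u0 by simp
  also have "\<dots> = 0\<^sub>v (n+1)"
    by (rule eq_vecI) (use adj(2) in \<open>auto simp: scalar_prod_def\<close>)
  finally have ab: "a - b = 0\<^sub>v (n+1)" .
  show ?thesis
  proof (rule eq_vecI)
    fix i assume "i < dim_vec b"
    then show "a $ i = b $ i" using arg_cong[OF ab, of "\<lambda>w. w $ i"] a b by simp
  qed (use a b in simp)
qed

end

context setupS begin

definition Sig :: "(nat \<times> int vec) set" where "Sig = (SIGMA n:UNIV. carrier_vec (n+1))"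

lemma phi_iter_up:
  assumes "n \<le> k" "k \<le> k'"
  shows "phi_iter Abar n (k'-n) v = phi_iter Abar k (k'-k) (phi_iter Abar n (k-n) v)"
proof -
  have e1: "(k-n)+(k'-k) = k'-n" and e2: "n+(k-n) = k" using assms by auto
  show ?thesis using phi_iter_add[of n "k-n" "k'-k" v] unfolding e1 e2 .
qed

lemma K0rel_D:
  assumes "((n,v),(m,w)) \<in> K0rel Abar"
  obtains k where "n \<le> k" "m \<le> k" "\<And>k'. k \<le> k' \<Longrightarrow> phi_iter Abar n (k'-n) v = phi_iter Abar m (k'-m) w"
proof -
  obtain k where k: "n \<le> k" "m \<le> k" "phi_iter Abar n (k-n) v = phi_iter Abar m (k-m) w"
    using assms unfolding K0rel_def by blast
  have "phi_iter Abar n (k'-n) v = phi_iter Abar m (k'-m) w" if "k \<le> k'" for k'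
    using phi_iter_up[OF k(1) that, of v] phi_iter_up[OF k(2) that, of w] k(3) by simp
  then show ?thesis using that k by blast
qed

lemma K0rel_carrier: "((n,v),(m,w)) \<in> K0rel Abar \<Longrightarrow> v \<in> carrier_vec (n+1) \<and> w \<in> carrier_vec (m+1)"
  unfolding K0rel_def by blast

lemma K0rel_I:
  "v \<in> carrier_vec (n+1) \<Longrightarrow> w \<in> carrier_vec (m+1) \<Longrightarrow> n \<le> k \<Longrightarrow> m \<le> k \<Longrightarrow>
   phi_iter Abar n (k-n) v = phi_iter Abar m (k-m) w \<Longrightarrow> ((n,v),(m,w)) \<in> K0rel Abar"
  unfolding K0rel_def by blast

lemma K0rel_trans:
  assumes xy: "((a,u),(b,v)) \<in> K0rel Abar" and yz: "((b,v),(d,w)) \<in> K0rel Abar"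
  shows "((a,u),(d,w)) \<in> K0rel Abar"
proof -
  obtain k1 where k1: "a \<le> k1" "b \<le> k1" "\<And>k'. k1 \<le> k' \<Longrightarrow> phi_iter Abar a (k'-a) u = phi_iter Abar b (k'-b) v"
    using K0rel_D[OF xy] by blast
  obtain k2 where k2: "b \<le> k2" "d \<le> k2" "\<And>k'. k2 \<le> k' \<Longrightarrow> phi_iter Abar b (k'-b) v = phi_iter Abar d (k'-d) w"
    using K0rel_D[OF yz] by blast
  have e1: "phi_iter Abar a (max k1 k2 - a) u = phi_iter Abar b (max k1 k2 - b) v" by (rule k1(3)) simp
  have e2: "phi_iter Abar b (max k1 k2 - b) v = phi_iter Abar d (max k1 k2 - d) w" by (rule k2(3)) simp
  have c1: "u \<in> carrier_vec (a+1)" using K0rel_carrier[OF xy] by blast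
  have c2: "w \<in> carrier_vec (d+1)" using K0rel_carrier[OF yz] by blast
  have l1: "a \<le> max k1 k2" using k1(1) by simp
  have l2: "d \<le> max k1 k2" using k2(2) by simp
  show ?thesis by (rule K0rel_I[OF c1 c2 l1 l2], rule trans[OF e1 e2])
qed

lemma K0rel_sym: "((n,v),(m,w)) \<in> K0rel Abar \<Longrightarrow> ((m,w),(n,v)) \<in> K0rel Abar"
  unfolding K0rel_def by auto

lemma equiv_K0: "equiv Sig (K0rel Abar)"
proof (rule equivI)
  show "K0rel Abar \<subseteq> Sig \<times> Sig"
  proof
    fix p assume p: "p \<in> K0rel Abar"
    obtain n v m w where pv: "p = ((n,v),(m,w))" by (cases p) auto
    have "v \<in> carrier_vec (n+1) \<and> w \<in> carrier_vec (m+1)" using K0rel_carrier p unfolding pv by blast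
    then show "p \<in> Sig \<times> Sig" unfolding pv Sig_def by simp
  qed
  show "refl_on Sig (K0rel Abar)"
    unfolding refl_on_def
  proof
    fix p assume p: "p \<in> Sig"
    obtain n v where pv: "p = (n,v)" by (cases p)
    have v: "v \<in> carrier_vec (n+1)" using p unfolding pv Sig_def by simp
    show "(p, p) \<in> K0rel Abar" unfolding pv by (rule K0rel_I[OF v v order_refl order_refl refl])
  qed
  show "sym (K0rel Abar)"
  proof (rule symI)
    fix x y assume xy: "(x, y) \<in> K0rel Abar"
    obtain a u where x: "x = (a,u)" by (cases x)
    obtain b v where y: "y = (b,v)" by (cases y)
    show "(y, x) \<in> K0rel Abar" using K0rel_sym[of a u b v] xy unfolding x y by simp
  qed
  show "trans (K0rel Abar)"
  proof (rule transI)
    fix x y z assume xy: "(x, y) \<in> K0rel Abar" and yz: "(y, z) \<in> K0rel Abar"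
    obtain a u where x: "x = (a,u)" by (cases x)
    obtain b v where y: "y = (b,v)" by (cases y)
    obtain d w where z: "z = (d,w)" by (cases z)
    have xy': "((a,u),(b,v)) \<in> K0rel Abar" using xy unfolding x y .
    have yz': "((b,v),(d,w)) \<in> K0rel Abar" using yz unfolding y z .
    show "(x, z) \<in> K0rel Abar" unfolding x z by (rule K0rel_trans[OF xy' yz'])
  qed
qed

lemma iota_K0: "v \<in> carrier_vec (n+1) \<Longrightarrow> iota Abar n v \<in> K0 Abar"
  unfolding iota_def K0_def by (rule quotientI) simp

lemma iota_eq_iff:
  assumes "v \<in> carrier_vec (n+1)" "w \<in> carrier_vec (m+1)"
  shows "iota Abar n v = iota Abar m w \<longleftrightarrow> ((n,v),(m,w)) \<in> K0rel Abar"
proof -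
  have s: "(n,v) \<in> Sig" "(m,w) \<in> Sig" using assms unfolding Sig_def by auto
  show ?thesis unfolding iota_def using equiv_class_eq_iff[OF equiv_K0, of "(n,v)" "(m,w)"] s by blast
qed

lemma K0_rep:
  assumes X: "X \<in> K0 Abar"
  shows "(SOME p. p \<in> X) \<in> Sig \<and> X = iota Abar (fst (SOME p. p \<in> X)) (snd (SOME p. p \<in> X))"
proof -
  obtain a where a1: "X = K0rel Abar `` {a}" and a2: "a \<in> Sig"
    using X unfolding K0_def Sig_def[symmetric] by (rule quotientE)
  have aX: "a \<in> X" unfolding a1 by (rule equiv_class_self[OF equiv_K0 a2])
  define q where "q = (SOME p. p \<in> X)"
  have qX: "q \<in> X" unfolding q_def using aX by (rule someI)
  have ap: "(a, q) \<in> K0rel Abar" using qX unfolding a1 Image_singleton_iff .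
  have qS: "q \<in> Sig" using equiv_type[OF equiv_K0] ap by blast
  have eq: "K0rel Abar `` {a} = K0rel Abar `` {q}" by (rule equiv_class_eq[OF equiv_K0 ap])
  have "X = iota Abar (fst q) (snd q)" unfolding iota_def prod.collapse a1 eq ..
  then show ?thesis using qS unfolding q_def[symmetric] by blast
qed

lemma PhiI_rel:
  assumes "((n,v),(m,w)) \<in> K0rel Abar"
  shows "PhiI n v = PhiI m w"
proof -
  obtain k where k: "n \<le> k" "m \<le> k" "\<And>k'. k \<le> k' \<Longrightarrow> phi_iter Abar n (k'-n) v = phi_iter Abar m (k'-m) w"
    using K0rel_D[OF assms] by blast
  have c: "v \<in> carrier_vec (n+1)" "w \<in> carrier_vec (m+1)" using K0rel_carrier[OF assms] by auto
  have e: "phi_iter Abar n (k-n) v = phi_iter Abar m (k-m) w" by (rule k(3)) simp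
  have e1: "n + (k-n) = k" and e2: "m + (k-m) = k" using k(1,2) by auto
  have "PhiI n v = PhiI (n + (k-n)) (phi_iter Abar n (k-n) v)" by (rule PhiI_iter[OF c(1), symmetric])
  also have "\<dots> = PhiI (m + (k-m)) (phi_iter Abar m (k-m) w)" unfolding e1 e2 e ..
  also have "\<dots> = PhiI m w" by (rule PhiI_iter[OF c(2)])
  finally show ?thesis .
qed

lemma K0add_eq:
  "K0add Abar X Y = iota Abar (max (fst (SOME p. p \<in> X)) (fst (SOME p. p \<in> Y)))
     (phi_iter Abar (fst (SOME p. p \<in> X)) (max (fst (SOME p. p \<in> X)) (fst (SOME p. p \<in> Y)) - fst (SOME p. p \<in> X)) (snd (SOME p. p \<in> X))
    + phi_iter Abar (fst (SOME p. p \<in> Y)) (max (fst (SOME p. p \<in> X)) (fst (SOME p. p \<in> Y)) - fst (SOME p. p \<in> Y)) (snd (SOME p. p \<in> Y)))"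
  unfolding K0add_def by (simp add: Let_def split_def)

end

context setupS begin

lemma AmI_adj: "AmI n * adj_mat (AmI n) = 1\<^sub>m (n+1)" "adj_mat (AmI n) * AmI n = 1\<^sub>m (n+1)"
  "adj_mat (AmI n) \<in> carrier_mat (n+1) (n+1)"
  using adj_mat[OF AmI_carrier[of n]] det_AmI[of n] by auto

lemma minv_Amat: "minv (Amat Abar c n) = map_mat rat_of_int (adj_mat (AmI n))"
proof (rule minv_unique[of _ "n+1"])
  show "Amat Abar c n * of_int_hom.mat_hom (adj_mat (AmI n)) = 1\<^sub>m (n + 1)"
    unfolding Amat_eq
    by (subst of_int_hom.mat_hom_mult[symmetric, OF AmI_carrier AmI_adj(3)], simp add: AmI_adj of_int_hom.mat_hom_one)
  show "of_int_hom.mat_hom (adj_mat (AmI n)) * Amat Abar c n = 1\<^sub>m (n + 1)"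
    unfolding Amat_eq
    by (subst of_int_hom.mat_hom_mult[symmetric, OF AmI_adj(3) AmI_carrier], simp add: AmI_adj of_int_hom.mat_hom_one)
qed (insert AmI_carrier AmI_adj(3), auto simp: Amat_eq)

lemma det_minv_Amat: "det (minv (Amat Abar c n)) = 1"
proof -
  have "det (AmI n * adj_mat (AmI n)) = det (AmI n) * det (adj_mat (AmI n))"
    by (rule det_mult[OF AmI_carrier AmI_adj(3)])
  then have "det (adj_mat (AmI n)) = 1" using AmI_adj(1)[of n] det_AmI[of n] by simp
  then show ?thesis unfolding minv_Amat of_int_hom.hom_det by simp
qed

lemma Gset_Z: "Gset Abar c = \<int>"
proof -
  have key: "q \<in> Gset Abar c \<longleftrightarrow> q \<in> \<int>" for q :: rat
  proof -
  have "q \<in> Gset Abar c \<longleftrightarrow> (\<exists>n\<in>{1..}. \<exists>a. q = rat_of_int a / det (minv (Amat Abar c n)))"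
    unfolding Gset_def by blast
  also have "\<dots> \<longleftrightarrow> (\<exists>a. q = rat_of_int a)"
    unfolding det_minv_Amat by auto
  also have "\<dots> \<longleftrightarrow> q \<in> \<int>" unfolding Ints_def by auto
  finally show ?thesis .
  qed
  then show ?thesis by blast
qed

lemma Sig_carrier: "p \<in> Sig \<Longrightarrow> snd p \<in> carrier_vec (fst p + 1)"
  unfolding Sig_def by auto

lemma exists_Psi: "\<exists>\<Psi>. \<forall>n\<ge>1. \<forall>v\<in>carrier_vec (n+1).
          (\<lambda>x. rat_of_int (\<Psi> (iota Abar n v) x)) = Phi Abar c E n v"
proof (rule exI[of _ "\<lambda>X. PhiI (fst (SOME p. p \<in> X)) (snd (SOME p. p \<in> X))"], intro allI impI ballI)
  fix n :: nat and v :: "int vec" assume v: "v \<in> carrier_vec (n+1)"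
  let ?X = "iota Abar n v"
  define q where "q = (SOME p. p \<in> ?X)"
  have r: "q \<in> Sig" "?X = iota Abar (fst q) (snd q)" using K0_rep[OF iota_K0[OF v]] unfolding q_def by auto
  have qc: "snd q \<in> carrier_vec (fst q + 1)" by (rule Sig_carrier[OF r(1)])
  have "((n,v),(fst q, snd q)) \<in> K0rel Abar" using iota_eq_iff[OF v qc] r(2) by simp
  then have e: "PhiI n v = PhiI (fst q) (snd q)" by (rule PhiI_rel)
  show "(\<lambda>x. rat_of_int ((\<lambda>X. PhiI (fst (SOME p. p \<in> X)) (snd (SOME p. p \<in> X))) ?X x)) = Phi Abar c E n v"
    unfolding q_def[symmetric] e[symmetric] using Phi_PhiI[OF v] by auto
qed

lemma Psi_all:
  assumes spec: "\<forall>n\<ge>1. \<forall>v\<in>carrier_vec (n+1). (\<lambda>x. rat_of_int (\<Psi> (iota Abar n v) x)) = Phi Abar c E n v"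
    and v: "v \<in> carrier_vec (n+1)"
  shows "\<Psi> (iota Abar n v) = PhiI n v"
proof -
  let ?w = "Abar n *\<^sub>v v"
  have w: "?w \<in> carrier_vec (Suc n + 1)" using mult_mat_vec_carrier[OF dims[of n] v] by simp
  have p1: "phi_iter Abar n (Suc n - n) v = ?w" by simp
  have p2: "phi_iter Abar (Suc n) (Suc n - Suc n) ?w = ?w" by simp
  have "((n,v),(Suc n, ?w)) \<in> K0rel Abar"
    by (rule K0rel_I[OF v w le_SucI[OF order_refl] order_refl], unfold p1 p2, rule refl)
  then have ie: "iota Abar n v = iota Abar (Suc n) ?w" using iota_eq_iff[OF v w] by simp
  have "(\<lambda>x. rat_of_int (\<Psi> (iota Abar (Suc n) ?w) x)) = Phi Abar c E (Suc n) ?w"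
    using spec w by simp
  also have "\<dots> = Phi Abar c E n v" by (rule Phi_Suc[OF v])
  finally have "rat_of_int (\<Psi> (iota Abar n v) x) = rat_of_int (PhiI n v x)" for x
    unfolding ie[symmetric] using Phi_PhiI[OF v, of x] by metis
  then show ?thesis by (intro ext) simp
qed

end

context setupS begin

lemma main_iso:
  assumes all: "\<And>n v. v \<in> carrier_vec (n+1) \<Longrightarrow> \<Psi> (iota Abar n v) = PhiI n v"
  shows "\<Psi> \<in> iso (K0grp Abar) (CXZgrp E) \<and> \<Psi> (K0unit Abar) = chiX E"
proof -
  define rep where "rep X = (SOME p. p \<in> X)" for X :: "(nat \<times> int vec) set"
  have rep: "rep X \<in> Sig" "X = iota Abar (fst (rep X)) (snd (rep X))"
    "snd (rep X) \<in> carrier_vec (fst (rep X) + 1)" if "X \<in> K0 Abar" for X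
    using K0_rep[OF that] Sig_carrier unfolding rep_def by auto
  have PsiX: "\<Psi> X = PhiI (fst (rep X)) (snd (rep X))" if "X \<in> K0 Abar" for X
  proof -
    have "\<Psi> X = \<Psi> (iota Abar (fst (rep X)) (snd (rep X)))" using rep(2)[OF that] by simp
    also have "\<dots> = PhiI (fst (rep X)) (snd (rep X))" by (rule all[OF rep(3)[OF that]])
    finally show ?thesis .
  qed
  define lift where "lift X k = phi_iter Abar (fst (rep X)) (k - fst (rep X)) (snd (rep X))" for X k
  have lift: "lift X k \<in> carrier_vec (k+1)" "PhiI k (lift X k) = \<Psi> X"
    if "X \<in> K0 Abar" "fst (rep X) \<le> k" for X k
  proof -
    have e: "fst (rep X) + (k - fst (rep X)) = k" using that(2) by simp
    show "lift X k \<in> carrier_vec (k+1)"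
      using phi_iter_carrier[OF rep(3)[OF that(1)], of "k - fst (rep X)"] unfolding lift_def e .
    show "PhiI k (lift X k) = \<Psi> X"
      using PhiI_iter[OF rep(3)[OF that(1)], of "k - fst (rep X)"] PsiX[OF that(1)] unfolding lift_def e by simp
  qed
  have carr: "\<Psi> X \<in> CXZ E" if "X \<in> K0 Abar" for X
    unfolding PsiX[OF that] by (rule PhiI_CXZ[OF rep(3)[OF that]])
  have mult: "\<Psi> (K0add Abar X Y) = (\<lambda>x. \<Psi> X x + \<Psi> Y x)" if X: "X \<in> K0 Abar" and Y: "Y \<in> K0 Abar" for X Y
  proof -
    let ?k = "max (fst (rep X)) (fst (rep Y))"
    have kx: "fst (rep X) \<le> ?k" and ky: "fst (rep Y) \<le> ?k" by auto
    have ka: "K0add Abar X Y = iota Abar ?k (lift X ?k + lift Y ?k)"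
      unfolding K0add_eq lift_def rep_def ..
    have s: "lift X ?k + lift Y ?k \<in> carrier_vec (?k+1)"
      using lift(1)[OF X kx] lift(1)[OF Y ky] by simp
    have "\<Psi> (K0add Abar X Y) = PhiI ?k (lift X ?k + lift Y ?k)" unfolding ka by (rule all[OF s])
    also have "\<dots> = (\<lambda>x. PhiI ?k (lift X ?k) x + PhiI ?k (lift Y ?k) x)"
      using PhiI_add[OF lift(1)[OF X kx] lift(1)[OF Y ky]] by (intro ext) simp
    also have "\<dots> = (\<lambda>x. \<Psi> X x + \<Psi> Y x)" using lift(2)[OF X kx] lift(2)[OF Y ky] by simp
    finally show ?thesis .
  qed
  have inj: "inj_on \<Psi> (K0 Abar)"
  proof (rule inj_onI)
    fix X Y assume X: "X \<in> K0 Abar" and Y: "Y \<in> K0 Abar" and eq: "\<Psi> X = \<Psi> Y"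
    let ?k = "max (fst (rep X)) (fst (rep Y))"
    have kx: "fst (rep X) \<le> ?k" and ky: "fst (rep Y) \<le> ?k" by auto
    have "PhiI ?k (lift X ?k) = PhiI ?k (lift Y ?k)" using lift(2)[OF X kx] lift(2)[OF Y ky] eq by simp
    then have ab: "lift X ?k = lift Y ?k" by (rule PhiI_inj[OF lift(1)[OF X kx] lift(1)[OF Y ky]])
    have "((fst (rep X), snd (rep X)), (fst (rep Y), snd (rep Y))) \<in> K0rel Abar"
      by (rule K0rel_I[OF rep(3)[OF X] rep(3)[OF Y] kx ky], use ab in \<open>simp add: lift_def\<close>)
    then have "iota Abar (fst (rep X)) (snd (rep X)) = iota Abar (fst (rep Y)) (snd (rep Y))"
      using iota_eq_iff[OF rep(3)[OF X] rep(3)[OF Y]] by simp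
    then show "X = Y" using rep(2)[OF X] rep(2)[OF Y] by simp
  qed
  have surj: "f \<in> \<Psi> ` K0 Abar" if f: "f \<in> CXZ E" for f
  proof -
    have fc: "continuous_on (Xmin E) f" and f0: "\<And>x. x \<notin> Xmin E \<Longrightarrow> f x = 0"
      using f unfolding CXZ_def by auto
    obtain N where N: "\<forall>x\<in>Xmin E. \<forall>y\<in>Xmin E. (\<forall>l\<le>N. x l = y l) \<longrightarrow> f x = f y"
      using unif_depth[OF fc] by blast
    obtain \<beta> where b: "\<forall>x\<in>Xmin E. f x = (\<Sum>l\<le>N. \<beta> l * chiB (r_seq E l) l x)"
      using inspan_rep[OF N] unfolding inspan_def by blast
    define u where "u = vec (N+1) \<beta>"
    have u: "u \<in> carrier_vec (N+1)" unfolding u_def by simp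
    define v where "v = adj_mat (AmI N) *\<^sub>v u"
    have v: "v \<in> carrier_vec (N+1)" unfolding v_def using mult_mat_vec_carrier[OF AmI_adj(3) u] .
    have Av: "AmI N *\<^sub>v v = u"
    proof -
      have "AmI N *\<^sub>v v = (AmI N * adj_mat (AmI N)) *\<^sub>v u"
        unfolding v_def by (rule assoc_mult_mat_vec[OF AmI_carrier AmI_adj(3) u, symmetric])
      also have "\<dots> = u" unfolding AmI_adj(1) using u by simp
      finally show ?thesis .
    qed
    have "PhiI N v = f"
    proof
      fix x show "PhiI N v x = f x"
      proof (cases "x \<in> Xmin E")
        case True
        have "PhiI N v x = (\<Sum>l\<le>N. u $ l * chiB (r_seq E l) l x)" unfolding PhiI_def Av using True by simp
        also have "\<dots> = (\<Sum>l\<le>N. \<beta> l * chiB (r_seq E l) l x)" unfolding u_def by (intro sum.cong) auto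
        also have "\<dots> = f x" using b True by simp
        finally show ?thesis .
      next
        case False then show ?thesis unfolding PhiI_def using f0 by simp
      qed
    qed
    then have "\<Psi> (iota Abar N v) = f" using all[OF v] by simp
    then show ?thesis using iota_K0[OF v] by blast
  qed
  have unit: "\<Psi> (K0unit Abar) = chiX E"
  proof
    fix x
    let ?u = "vec 1 (\<lambda>_. 1) :: int vec"
    have u: "?u \<in> carrier_vec (0+1)" by simp
    have "\<Psi> (K0unit Abar) = PhiI 0 ?u" unfolding K0unit_def by (rule all[OF u])
    moreover have "AmI 0 *\<^sub>v ?u = ?u" using u by simp
    ultimately have "\<Psi> (K0unit Abar) x = (if x \<in> Xmin E then chiB (r_seq E 0) 0 x else 0)"
      unfolding PhiI_def by simp
    also have "\<dots> = chiX E x" unfolding chiX_def r_seq_0 chiB_def by (auto dest: XminD(1))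
    finally show "\<Psi> (K0unit Abar) x = chiX E x" .
  qed
  have hom: "\<Psi> \<in> hom (K0grp Abar) (CXZgrp E)"
    unfolding hom_def K0grp_def CXZgrp_def using carr mult by auto
  have bij: "bij_betw \<Psi> (carrier (K0grp Abar)) (carrier (CXZgrp E))"
    unfolding K0grp_def CXZgrp_def bij_betw_def using inj carr surj by auto
  show ?thesis unfolding iso_def using hom bij unit by blast
qed

end

theorem theorem4p2:
  fixes Abar :: "nat \<Rightarrow> int mat" and c :: "nat \<Rightarrow> int vec"
    and E :: "nat \<Rightarrow> nat \<Rightarrow> nat \<Rightarrow> nat"
  assumes dims: "\<And>n. Abar n \<in> carrier_mat (n+2) (n+1)"
    and nonneg: "\<And>n i j. i < n+2 \<Longrightarrow> j < n+1 \<Longrightarrow> 0 \<le> Abar n $$ (i,j)"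
    and rank: "\<And>n. vec_space.rank (n+2) (map_mat rat_of_int (Abar n)) = n+1"
    and red: "minimal_reduction Abar E"
    and cdim: "\<And>n. c n \<in> carrier_vec (n+2)"
    and det1: "\<And>n. det (Acomp Abar c n) = 1"
  shows "Gset Abar c = \<int>
    \<and> (\<exists>\<Psi>. \<forall>n\<ge>1. \<forall>v\<in>carrier_vec (n+1).
          (\<lambda>x. rat_of_int (\<Psi> (iota Abar n v) x)) = Phi Abar c E n v)
    \<and> (\<forall>\<Psi>. (\<forall>n\<ge>1. \<forall>v\<in>carrier_vec (n+1).
          (\<lambda>x. rat_of_int (\<Psi> (iota Abar n v) x)) = Phi Abar c E n v)
        \<longrightarrow> \<Psi> \<in> iso (K0grp Abar) (CXZgrp E) \<and> \<Psi> (K0unit Abar) = chiX E)"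
proof -
  have S: "setupS Abar c E" unfolding setupS_def using dims red cdim det1 by blast
  interpret S: setupS Abar c E by (rule S)
  have p3: "\<forall>\<Psi>. (\<forall>n\<ge>1. \<forall>v\<in>carrier_vec (n+1).
          (\<lambda>x. rat_of_int (\<Psi> (iota Abar n v) x)) = Phi Abar c E n v)
        \<longrightarrow> \<Psi> \<in> iso (K0grp Abar) (CXZgrp E) \<and> \<Psi> (K0unit Abar) = chiX E"
  proof (intro allI impI)
    fix \<Psi> :: "(nat \<times> int vec) set \<Rightarrow> (nat \<Rightarrow> nat) \<Rightarrow> int"
    assume spec: "\<forall>n\<ge>1. \<forall>v\<in>carrier_vec (n+1).
          (\<lambda>x. rat_of_int (\<Psi> (iota Abar n v) x)) = Phi Abar c E n v"
    show "\<Psi> \<in> iso (K0grp Abar) (CXZgrp E) \<and> \<Psi> (K0unit Abar) = chiX E"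
      by (rule S.main_iso, rule S.Psi_all[OF spec])
  qed
  show ?thesis using S.Gset_Z S.exists_Psi p3 by blast
qed

end
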